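(* Let $\mathsf{T} = (T,\eta,\mu)$ be a monoid in a left-skew monoidal category $(\mathcal{C},\mathsf{I},\otimes,\lambda,\rho,\alpha)$, and let $(\mathcal{E},\mathcal{M})$ be an orthogonal factorization system on $\mathcal{C}$ such that $\mathcal{E}$ is closed under $(-)\otimes S$ for each object $(S,s)$ of $\mathcal{M}/T$. Then the $\mathcal{M}$-grading $(\mathcal{M}/\mathsf{T}, T_{\mathcal{M}}, \tau)$ of $\mathsf{T}$ (see context) is a pseudoterminal object of the 2-category $\mathrm{Grade}_{\mathcal{M}}(\mathsf{T})$. Explicitly, for every $\mathcal{M}$-grading $(\mathcal{G},G,g)$ of the monoid $\mathsf{T}$: (i) there is a morphism of $\mathcal{M}$-gradings $(F,f):(\mathcal{G},G,g)\to(\mathcal{M}/\mathsf{T},T_{\mathcal{M}},\tau)$; (ii) it is essentially unique, in that there is an assignment, natural in $(F',f')$, of an invertible 2-cell $(F',f')\cong(F,f)$ to every morphism of $\mathcal{M}$-gradings $(F',f'):(\mathcal{G},G,g)\to(\mathcal{M}/\mathsf{T},T_{\mathcal{M}},\tau)$.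
   Context: Left-skew monoidal category: category with object $\mathsf{I}$, functor $\otimes$, and natural (not necessarily invertible) $\lambda_X:\mathsf{I}\otimes X\to X$, $\rho_X:X\to X\otimes\mathsf{I}$, $\alpha_{X,Y,Z}:(X\otimes Y)\otimes Z\to X\otimes(Y\otimes Z)$ satisfying $\lambda_{\mathsf{I}}\rho_{\mathsf{I}}=\mathrm{id}$, $(X\otimes\lambda_Y)\alpha_{X,\mathsf{I},Y}(\rho_X\otimes Y)=\mathrm{id}$, $\lambda_{X\otimes Y}\alpha_{\mathsf{I},X,Y}=\lambda_X\otimes Y$, $\alpha_{X,Y,\mathsf{I}}\rho_{X\otimes Y}=X\otimes\rho_Y$, and the pentagon $(X\otimes\alpha_{Y,Z,W})\alpha_{X,Y\otimes Z,W}(\alpha_{X,Y,Z}\otimes W)=\alpha_{X,Y,Z\otimes W}\alpha_{X\otimes Y,Z,W}$. A monoid: $\eta:\mathsf{I}\to T$, $\mu:T\otimes T\to T$ with $\mu(\eta\otimes T)=\lambda_T$, $\mu(T\otimes\eta)\rho_T=\mathrm{id}$, $\mu(\mu\otimes T)=\mu(T\otimes\mu)\alpha_{T,T,T}$. Lax monoidal functors between skew monoidal categories (functor $G$ with $\eta^G:\mathsf{I}\to G I$ and natural $\mu^G_{d,d'}:Gd\otimes Gd'\to G(d\odot d')$ satisfying the usual unit and associativity axioms) and monoidal transformations are defined as for monoidal categories. Orthogonal factorization system $(\mathcal{E},\mathcal{M})$: both classes contain isomorphisms and are closed under composition, every square $g e = m f$ with $e\in\mathcal{E}$, $m\in\mathcal{M}$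 has a unique diagonal $d$ with $de=f$, $md=g$, and every morphism factors as an $\mathcal{E}$-morphism followed by an $\mathcal{M}$-morphism. $\mathcal{M}$-grading of $\mathsf{T}$: a skew monoidal category $\mathcal{G}=(\mathcal{G},I,\odot)$, a lax monoidal functor $G:\mathcal{G}\to\mathcal{C}$, and a monoidal transformation with components $g_d:Gd\to T$ in $\mathcal{M}$ (monoidality: $g_I\circ\eta^G=\eta$ and $g_{d\odot d'}\circ\mu^G_{d,d'}=\mu\circ(g_d\otimes g_{d'})$). A morphism $(F,f)$ of gradings is a lax monoidal $F:\mathcal{G}\to\mathcal{G}'$ with a monoidal natural isomorphism $f:G'\cdot F\cong G$ such that $g_d\circ f_d = g'_{Fd}$. A 2-cell $\beta:(F,f)\Rightarrow(F',f')$ is a monoidal transformation $\beta:F\Rightarrow F'$ with $f'\circ(G'\cdot\beta)=f$. These form the 2-category $\mathrm{Grade}_{\mathcal{M}}(\mathsf{T})$. The canonical grading: $\mathcal{M}/T$ has objects $(S,s)$ with $s:S\to T$ in $\mathcal{M}$ and morphisms $f$ with $s'f=s$. Factor $\eta=j\circ q$ ($q:\mathsf{I}\to\mathsf{J}\in\mathcal{E}$, $j\in\mathcal{M}$) and $\mu\circ(s\otimes s')=(s\boxdot s')\circ q_{S,S'}$ ($q_{S,S'}:S\otimes S'\to S\boxdot S'\in\mathcal{E}$, $s\boxdot s'\in\mathcal{M}$). Then $\mathcal{M}/\mathsf{T}=(\mathcal{M}/T,(\mathsf{J},j),\boxdot)$ is a skew monoidal category, with action on morphisms and structure maps $\ell,r,a$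 the unique morphisms (diagonals) compatible with the $q$'s and the structure maps of $\mathcal{C}$: $(f\boxdot f')q_{S_1,S_1'}=q_{S_2,S_2'}(f\otimes f')$; $\ell_S q_{\mathsf{J},S}(q\otimes S)=\lambda_S$; $r_S=q_{S,\mathsf{J}}(S\otimes q)\rho_S$; $a\, q_{S\boxdot S',S''}(q_{S,S'}\otimes S'')=q_{S,S'\boxdot S''}(S\otimes q_{S',S''})\alpha$ (each also commuting with the $\mathcal{M}$-maps to $T$). The lax monoidal functor $T_{\mathcal{M}}:\mathcal{M}/\mathsf{T}\to\mathcal{C}$ sends $(S,s)\mapsto S$, with unit $q$ and multiplication $q_{S,S'}$; the monoidal transformation $\tau$ has components $\tau_{(S,s)}=s$. *)

theory Defs
  imports Main
begin

section \<open>Categories (explicit carriers)\<close>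

record ('o,'m) cat =
  cobj :: "'o set"
  carr :: "'m set"
  cdom :: "'m \<Rightarrow> 'o"
  ccod :: "'m \<Rightarrow> 'o"
  cid  :: "'o \<Rightarrow> 'm"
  ccomp :: "'m \<Rightarrow> 'm \<Rightarrow> 'm"   (* ccomp C g f = g o f *)

definition hom :: "('o,'m,'z) cat_scheme \<Rightarrow> 'o \<Rightarrow> 'o \<Rightarrow> 'm set" where
  "hom C a b = {f \<in> carr C. cdom C f = a \<and> ccod C f = b}"

definition is_category :: "('o,'m,'z) cat_scheme \<Rightarrow> bool" where
  "is_category C \<longleftrightarrow>
    (\<forall>f\<in>carr C. cdom C f \<in> cobj C \<and> ccod C f \<in> cobj C) \<and>
    (\<forall>a\<in>cobj C. cid C a \<in> hom C a a) \<and>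
    (\<forall>f\<in>carr C. \<forall>g\<in>carr C. cdom C g = ccod C f \<longrightarrow>
        ccomp C g f \<in> hom C (cdom C f) (ccod C g)) \<and>
    (\<forall>f\<in>carr C. ccomp C f (cid C (cdom C f)) = f \<and> ccomp C (cid C (ccod C f)) f = f) \<and>
    (\<forall>f\<in>carr C. \<forall>g\<in>carr C. \<forall>h\<in>carr C. cdom C g = ccod C f \<longrightarrow> cdom C h = ccod C g \<longrightarrow>
        ccomp C h (ccomp C g f) = ccomp C (ccomp C h g) f)"

definition is_iso :: "('o,'m,'z) cat_scheme \<Rightarrow> 'm \<Rightarrow> bool" where
  "is_iso C f \<longleftrightarrow> f \<in> carr C \<and>
    (\<exists>g\<in>hom C (ccod C f) (cdom C f).
        ccomp C g f = cid C (cdom C f) \<and> ccomp C f g = cid C (ccod C f))"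

section \<open>Left-skew monoidal categories\<close>

record ('o,'m) skewcat = "('o,'m) cat" +
  tunit :: 'o
  tens  :: "'o \<Rightarrow> 'o \<Rightarrow> 'o"
  tensm :: "'m \<Rightarrow> 'm \<Rightarrow> 'm"
  lam   :: "'o \<Rightarrow> 'm"
  rho   :: "'o \<Rightarrow> 'm"
  alph  :: "'o \<Rightarrow> 'o \<Rightarrow> 'o \<Rightarrow> 'm"

definition is_skew :: "('o,'m,'z) skewcat_scheme \<Rightarrow> bool" where
  "is_skew C \<longleftrightarrow>
   (let Ob = cobj C; Ar = carr C; dm = cdom C; cd = ccod C; cp = ccomp C; i = cid C;
        I = tunit C; t = tens C; tm = tensm C; l = lam C; r = rho C; a = alph C in
    is_category C \<and>
    I \<in> Ob \<and>
    (\<forall>x\<in>Ob. \<forall>y\<in>Ob. t x y \<in> Ob) \<and>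
    (\<forall>f\<in>Ar. \<forall>g\<in>Ar. tm f g \<in> hom C (t (dm f) (dm g)) (t (cd f) (cd g))) \<and>
    (\<forall>x\<in>Ob. \<forall>y\<in>Ob. tm (i x) (i y) = i (t x y)) \<and>
    (\<forall>f\<in>Ar. \<forall>g\<in>Ar. \<forall>f'\<in>Ar. \<forall>g'\<in>Ar. dm g = cd f \<longrightarrow> dm g' = cd f' \<longrightarrow>
        tm (cp g f) (cp g' f') = cp (tm g g') (tm f f')) \<and>
    (\<forall>x\<in>Ob. l x \<in> hom C (t I x) x \<and> r x \<in> hom C x (t x I)) \<and>
    (\<forall>x\<in>Ob. \<forall>y\<in>Ob. \<forall>z\<in>Ob. a x y z \<in> hom C (t (t x y) z) (t x (t y z))) \<and>
    (\<forall>f\<in>Ar. cp f (l (dm f)) = cp (l (cd f)) (tm (i I) f)) \<and>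
    (\<forall>f\<in>Ar. cp (tm f (i I)) (r (dm f)) = cp (r (cd f)) f) \<and>
    (\<forall>f\<in>Ar. \<forall>g\<in>Ar. \<forall>h\<in>Ar.
        cp (tm f (tm g h)) (a (dm f) (dm g) (dm h)) = cp (a (cd f) (cd g) (cd h)) (tm (tm f g) h)) \<and>
    cp (l I) (r I) = i I \<and>
    (\<forall>x\<in>Ob. \<forall>y\<in>Ob. cp (tm (i x) (l y)) (cp (a x I y) (tm (r x) (i y))) = i (t x y)) \<and>
    (\<forall>x\<in>Ob. \<forall>y\<in>Ob. cp (l (t x y)) (a I x y) = tm (l x) (i y)) \<and>
    (\<forall>x\<in>Ob. \<forall>y\<in>Ob. cp (a x y I) (r (t x y)) = tm (i x) (r y)) \<and>
    (\<forall>x\<in>Ob. \<forall>y\<in>Ob. \<forall>z\<in>Ob. \<forall>w\<in>Ob.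
        cp (tm (i x) (a y z w)) (cp (a x (t y z) w) (tm (a x y z) (i w)))
        = cp (a x y (t z w)) (a (t x y) z w)))"

definition is_monoid :: "('o,'m,'z) skewcat_scheme \<Rightarrow> 'o \<Rightarrow> 'm \<Rightarrow> 'm \<Rightarrow> bool" where
  "is_monoid C T e m \<longleftrightarrow>
   (let cp = ccomp C; i = cid C; tm = tensm C in
    T \<in> cobj C \<and> e \<in> hom C (tunit C) T \<and> m \<in> hom C (tens C T T) T \<and>
    cp m (tm e (i T)) = lam C T \<and>
    cp m (cp (tm (i T) e) (rho C T)) = i T \<and>
    cp m (tm m (i T)) = cp m (cp (tm (i T) m) (alph C T T T)))"

section \<open>Orthogonal factorization systems\<close>

definition is_ofs :: "('o,'m,'z) cat_scheme \<Rightarrow> 'm set \<Rightarrow> 'm set \<Rightarrow> bool" where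
  "is_ofs C E M \<longleftrightarrow>
   (let dm = cdom C; cd = ccod C; cp = ccomp C in
    E \<subseteq> carr C \<and> M \<subseteq> carr C \<and>
    {f. is_iso C f} \<subseteq> E \<and> {f. is_iso C f} \<subseteq> M \<and>
    (\<forall>f\<in>E. \<forall>g\<in>E. dm g = cd f \<longrightarrow> cp g f \<in> E) \<and>
    (\<forall>f\<in>M. \<forall>g\<in>M. dm g = cd f \<longrightarrow> cp g f \<in> M) \<and>
    (\<forall>e\<in>E. \<forall>n\<in>M. \<forall>f\<in>carr C. \<forall>g\<in>carr C.
        dm f = dm e \<longrightarrow> cd f = dm n \<longrightarrow> dm g = cd e \<longrightarrow> cd g = cd n \<longrightarrow> cp g e = cp n f \<longrightarrow>
        (\<exists>!d. d \<in> hom C (cd e) (dm n) \<and> cp d e = f \<and> cp n d = g)) \<and>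
    (\<forall>h\<in>carr C. \<exists>e\<in>E. \<exists>n\<in>M. dm n = cd e \<and> cp n e = h))"

section \<open>Lax monoidal functors and monoidal transformations\<close>

record ('a,'b,'c,'d) laxf =
  fo :: "'a \<Rightarrow> 'c"
  fm :: "'b \<Rightarrow> 'd"
  lu :: "'d"
  lm :: "'a \<Rightarrow> 'a \<Rightarrow> 'd"

definition is_functor ::
  "('a,'b,'z1) cat_scheme \<Rightarrow> ('c,'d,'z2) cat_scheme \<Rightarrow> ('a \<Rightarrow> 'c) \<Rightarrow> ('b \<Rightarrow> 'd) \<Rightarrow> bool" where
  "is_functor C D Fo Fm \<longleftrightarrow>
    (\<forall>x\<in>cobj C. Fo x \<in> cobj D) \<and>
    (\<forall>f\<in>carr C. Fm f \<in> hom D (Fo (cdom C f)) (Fo (ccod C f))) \<and>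
    (\<forall>x\<in>cobj C. Fm (cid C x) = cid D (Fo x)) \<and>
    (\<forall>f\<in>carr C. \<forall>g\<in>carr C. cdom C g = ccod C f \<longrightarrow>
        Fm (ccomp C g f) = ccomp D (Fm g) (Fm f))"

definition is_lax ::
  "('a,'b,'z1) skewcat_scheme \<Rightarrow> ('c,'d,'z2) skewcat_scheme \<Rightarrow> ('a,'b,'c,'d) laxf \<Rightarrow> bool" where
  "is_lax C D F \<longleftrightarrow>
   (let Fo = fo F; Fm = fm F; u = lu F; \<mu> = lm F; cp = ccomp D; i = cid D; tD = tensm D;
        I = tunit C in
    is_functor C D Fo Fm \<and>
    u \<in> hom D (tunit D) (Fo I) \<and>
    (\<forall>x\<in>cobj C. \<forall>y\<in>cobj C. \<mu> x y \<in> hom D (tens D (Fo x) (Fo y)) (Fo (tens C x y))) \<and>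
    (\<forall>f\<in>carr C. \<forall>g\<in>carr C.
        cp (Fm (tensm C f g)) (\<mu> (cdom C f) (cdom C g))
        = cp (\<mu> (ccod C f) (ccod C g)) (tD (Fm f) (Fm g))) \<and>
    (\<forall>x\<in>cobj C. cp (Fm (lam C x)) (cp (\<mu> I x) (tD u (i (Fo x)))) = lam D (Fo x)) \<and>
    (\<forall>x\<in>cobj C. cp (\<mu> x I) (cp (tD (i (Fo x)) u) (rho D (Fo x))) = Fm (rho C x)) \<and>
    (\<forall>x\<in>cobj C. \<forall>y\<in>cobj C. \<forall>z\<in>cobj C.
        cp (Fm (alph C x y z)) (cp (\<mu> (tens C x y) z) (tD (\<mu> x y) (i (Fo z))))
        = cp (\<mu> x (tens C y z)) (cp (tD (i (Fo x)) (\<mu> y z)) (alph D (Fo x) (Fo y) (Fo z)))))"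

definition is_montrans ::
  "('a,'b,'z1) skewcat_scheme \<Rightarrow> ('c,'d,'z2) skewcat_scheme \<Rightarrow>
   ('a,'b,'c,'d) laxf \<Rightarrow> ('a,'b,'c,'d) laxf \<Rightarrow> ('a \<Rightarrow> 'd) \<Rightarrow> bool" where
  "is_montrans C D F F' \<theta> \<longleftrightarrow>
    (\<forall>x\<in>cobj C. \<theta> x \<in> hom D (fo F x) (fo F' x)) \<and>
    (\<forall>f\<in>carr C. ccomp D (\<theta> (ccod C f)) (fm F f) = ccomp D (fm F' f) (\<theta> (cdom C f))) \<and>
    ccomp D (\<theta> (tunit C)) (lu F) = lu F' \<and>
    (\<forall>x\<in>cobj C. \<forall>y\<in>cobj C.
        ccomp D (\<theta> (tens C x y)) (lm F x y) = ccomp D (lm F' x y) (tensm D (\<theta> x) (\<theta> y)))"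

text \<open>Composite G' . F of lax monoidal functors (F first, then G'), composition taken in C.\<close>
definition lax_comp ::
  "('o,'m,'z) skewcat_scheme \<Rightarrow> ('c,'d,'o,'m) laxf \<Rightarrow> ('a,'b,'c,'d) laxf \<Rightarrow> ('a,'b,'o,'m) laxf" where
  "lax_comp C G' F =
    \<lparr> fo = fo G' \<circ> fo F, fm = fm G' \<circ> fm F,
      lu = ccomp C (fm G' (lu F)) (lu G'),
      lm = (\<lambda>x y. ccomp C (fm G' (lm F x y)) (lm G' (fo F x) (fo F y))) \<rparr>"

section \<open>M-gradings of a monoid and the 2-category Grade_M(T)\<close>

definition is_grading ::
  "('o,'m,'z) skewcat_scheme \<Rightarrow> 'o \<Rightarrow> 'm \<Rightarrow> 'm \<Rightarrow> 'm set \<Rightarrow>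
   ('go,'gm,'z2) skewcat_scheme \<Rightarrow> ('go,'gm,'o,'m) laxf \<Rightarrow> ('go \<Rightarrow> 'm) \<Rightarrow> bool" where
  "is_grading C T e m M Gr G g \<longleftrightarrow>
    is_skew Gr \<and> is_lax Gr C G \<and>
    (\<forall>d\<in>cobj Gr. g d \<in> hom C (fo G d) T \<and> g d \<in> M) \<and>
    (\<forall>f\<in>carr Gr. ccomp C (g (ccod Gr f)) (fm G f) = g (cdom Gr f)) \<and>
    ccomp C (g (tunit Gr)) (lu G) = e \<and>
    (\<forall>d\<in>cobj Gr. \<forall>d'\<in>cobj Gr.
        ccomp C (g (tens Gr d d')) (lm G d d') = ccomp C m (tensm C (g d) (g d')))"

definition is_grading_mor ::
  "('o,'m,'z) skewcat_scheme \<Rightarrow>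
   ('go,'gm,'z2) skewcat_scheme \<Rightarrow> ('go,'gm,'o,'m) laxf \<Rightarrow> ('go \<Rightarrow> 'm) \<Rightarrow>
   ('ho,'hm,'z3) skewcat_scheme \<Rightarrow> ('ho,'hm,'o,'m) laxf \<Rightarrow> ('ho \<Rightarrow> 'm) \<Rightarrow>
   ('go,'gm,'ho,'hm) laxf \<Rightarrow> ('go \<Rightarrow> 'm) \<Rightarrow> bool" where
  "is_grading_mor C Gr G g Gr' G' g' F f \<longleftrightarrow>
    is_lax Gr Gr' F \<and>
    is_montrans Gr C (lax_comp C G' F) G f \<and>
    (\<forall>d\<in>cobj Gr. is_iso C (f d)) \<and>
    (\<forall>d\<in>cobj Gr. ccomp C (g d) (f d) = g' (fo F d))"

definition is_grading_2cell ::
  "('o,'m,'z) skewcat_scheme \<Rightarrow>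
   ('go,'gm,'z2) skewcat_scheme \<Rightarrow> ('ho,'hm,'z3) skewcat_scheme \<Rightarrow> ('ho,'hm,'o,'m) laxf \<Rightarrow>
   ('go,'gm,'ho,'hm) laxf \<Rightarrow> ('go \<Rightarrow> 'm) \<Rightarrow> ('go,'gm,'ho,'hm) laxf \<Rightarrow> ('go \<Rightarrow> 'm) \<Rightarrow>
   ('go \<Rightarrow> 'hm) \<Rightarrow> bool" where
  "is_grading_2cell C Gr Gr' G' F f F' f' \<beta> \<longleftrightarrow>
    is_montrans Gr Gr' F F' \<beta> \<and>
    (\<forall>d\<in>cobj Gr. ccomp C (f' d) (fm G' (\<beta> d)) = f d)"

definition is_inv_grading_2cell ::
  "('o,'m,'z) skewcat_scheme \<Rightarrow>
   ('go,'gm,'z2) skewcat_scheme \<Rightarrow> ('ho,'hm,'z3) skewcat_scheme \<Rightarrow> ('ho,'hm,'o,'m) laxf \<Rightarrow>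
   ('go,'gm,'ho,'hm) laxf \<Rightarrow> ('go \<Rightarrow> 'm) \<Rightarrow> ('go,'gm,'ho,'hm) laxf \<Rightarrow> ('go \<Rightarrow> 'm) \<Rightarrow>
   ('go \<Rightarrow> 'hm) \<Rightarrow> bool" where
  "is_inv_grading_2cell C Gr Gr' G' F f F' f' \<beta> \<longleftrightarrow>
    is_grading_2cell C Gr Gr' G' F f F' f' \<beta> \<and>
    (\<exists>\<beta>'. is_grading_2cell C Gr Gr' G' F' f' F f \<beta>' \<and>
       (\<forall>d\<in>cobj Gr. ccomp Gr' (\<beta>' d) (\<beta> d) = cid Gr' (fo F d) \<and>
                     ccomp Gr' (\<beta> d) (\<beta>' d) = cid Gr' (fo F' d)))"

section \<open>The canonical grading M/T\<close>

definition fact :: "('o,'m,'z) cat_scheme \<Rightarrow> 'm set \<Rightarrow> 'm set \<Rightarrow> 'm \<Rightarrow> 'm \<times> 'm" where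
  "fact C E M h = (SOME (q,n). q \<in> E \<and> n \<in> M \<and> cdom C n = ccod C q \<and> ccomp C n q = h)"

type_synonym ('o,'m) sobj = "'o \<times> 'm"
type_synonym ('o,'m) smor = "('o \<times> 'm) \<times> 'm \<times> ('o \<times> 'm)"

definition sl_obj :: "('o,'m,'z) cat_scheme \<Rightarrow> 'm set \<Rightarrow> 'o \<Rightarrow> ('o,'m) sobj set" where
  "sl_obj C M T = {(S,s). s \<in> M \<and> cdom C s = S \<and> ccod C s = T}"

definition sl_arr :: "('o,'m,'z) cat_scheme \<Rightarrow> 'm set \<Rightarrow> 'o \<Rightarrow> ('o,'m) smor set" where
  "sl_arr C M T = {(x,f,y). x \<in> sl_obj C M T \<and> y \<in> sl_obj C M T \<and>
                          f \<in> hom C (fst x) (fst y) \<and> ccomp C (snd y) f = snd x}"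

definition sl_q :: "('o,'m,'z) cat_scheme \<Rightarrow> 'm set \<Rightarrow> 'm set \<Rightarrow> 'm \<Rightarrow> 'm" where
  "sl_q C E M e = fst (fact C E M e)"

definition sl_unit :: "('o,'m,'z) cat_scheme \<Rightarrow> 'm set \<Rightarrow> 'm set \<Rightarrow> 'm \<Rightarrow> ('o,'m) sobj" where
  "sl_unit C E M e = (ccod C (fst (fact C E M e)), snd (fact C E M e))"

definition sl_qT :: "('o,'m,'z) skewcat_scheme \<Rightarrow> 'm set \<Rightarrow> 'm set \<Rightarrow> 'm \<Rightarrow>
    ('o,'m) sobj \<Rightarrow> ('o,'m) sobj \<Rightarrow> 'm" where
  "sl_qT C E M m x y = fst (fact C E M (ccomp C m (tensm C (snd x) (snd y))))"

definition sl_tens :: "('o,'m,'z) skewcat_scheme \<Rightarrow> 'm set \<Rightarrow> 'm set \<Rightarrow> 'm \<Rightarrow>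
    ('o,'m) sobj \<Rightarrow> ('o,'m) sobj \<Rightarrow> ('o,'m) sobj" where
  "sl_tens C E M m x y =
     (let p = fact C E M (ccomp C m (tensm C (snd x) (snd y))) in (ccod C (fst p), snd p))"

definition sl_tensm :: "('o,'m,'z) skewcat_scheme \<Rightarrow> 'm set \<Rightarrow> 'm set \<Rightarrow> 'm \<Rightarrow>
    ('o,'m) smor \<Rightarrow> ('o,'m) smor \<Rightarrow> ('o,'m) smor" where
  "sl_tensm C E M m u v =
    (let x = fst u; f = fst (snd u); y = snd (snd u);
         x' = fst v; f' = fst (snd v); y' = snd (snd v);
         s = sl_tens C E M m x x'; t = sl_tens C E M m y y' in
     (s, SOME d. d \<in> hom C (fst s) (fst t) \<and>
               ccomp C d (sl_qT C E M m x x') = ccomp C (sl_qT C E M m y y') (tensm C f f') \<and>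
               ccomp C (snd t) d = snd s, t))"

definition sl_lam :: "('o,'m,'z) skewcat_scheme \<Rightarrow> 'm set \<Rightarrow> 'm set \<Rightarrow> 'm \<Rightarrow> 'm \<Rightarrow>
    ('o,'m) sobj \<Rightarrow> ('o,'m) smor" where
  "sl_lam C E M e m x =
    (let U = sl_unit C E M e; s = sl_tens C E M m U x in
     (s, SOME d. d \<in> hom C (fst s) (fst x) \<and>
               ccomp C d (ccomp C (sl_qT C E M m U x) (tensm C (sl_q C E M e) (cid C (fst x))))
                 = lam C (fst x) \<and>
               ccomp C (snd x) d = snd s, x))"

definition sl_rho :: "('o,'m,'z) skewcat_scheme \<Rightarrow> 'm set \<Rightarrow> 'm set \<Rightarrow> 'm \<Rightarrow> 'm \<Rightarrow>
    ('o,'m) sobj \<Rightarrow> ('o,'m) smor" where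
  "sl_rho C E M e m x =
    (let U = sl_unit C E M e in
     (x, ccomp C (sl_qT C E M m x U) (ccomp C (tensm C (cid C (fst x)) (sl_q C E M e)) (rho C (fst x))),
      sl_tens C E M m x U))"

definition sl_alph :: "('o,'m,'z) skewcat_scheme \<Rightarrow> 'm set \<Rightarrow> 'm set \<Rightarrow> 'm \<Rightarrow>
    ('o,'m) sobj \<Rightarrow> ('o,'m) sobj \<Rightarrow> ('o,'m) sobj \<Rightarrow> ('o,'m) smor" where
  "sl_alph C E M m x y z =
    (let tt = sl_tens C E M m; qq = sl_qT C E M m;
         s = tt (tt x y) z; t = tt x (tt y z) in
     (s, SOME d. d \<in> hom C (fst s) (fst t) \<and>
               ccomp C d (ccomp C (qq (tt x y) z) (tensm C (qq x y) (cid C (fst z))))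
                 = ccomp C (qq x (tt y z))
                     (ccomp C (tensm C (cid C (fst x)) (qq y z)) (alph C (fst x) (fst y) (fst z))) \<and>
               ccomp C (snd t) d = snd s, t))"

definition slice_skew :: "('o,'m,'z) skewcat_scheme \<Rightarrow> 'm set \<Rightarrow> 'm set \<Rightarrow> 'o \<Rightarrow> 'm \<Rightarrow> 'm \<Rightarrow>
    (('o,'m) sobj, ('o,'m) smor) skewcat" where
  "slice_skew C E M T e m =
    \<lparr> cobj = sl_obj C M T, carr = sl_arr C M T,
      cdom = (\<lambda>u. fst u), ccod = (\<lambda>u. snd (snd u)),
      cid = (\<lambda>x. (x, cid C (fst x), x)),
      ccomp = (\<lambda>v u. (fst u, ccomp C (fst (snd v)) (fst (snd u)), snd (snd v))),
      tunit = sl_unit C E M e,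
      tens = sl_tens C E M m, tensm = sl_tensm C E M m,
      lam = sl_lam C E M e m, rho = sl_rho C E M e m, alph = sl_alph C E M m \<rparr>"

definition slice_fun :: "('o,'m,'z) skewcat_scheme \<Rightarrow> 'm set \<Rightarrow> 'm set \<Rightarrow> 'm \<Rightarrow> 'm \<Rightarrow>
    (('o,'m) sobj, ('o,'m) smor, 'o, 'm) laxf" where
  "slice_fun C E M e m =
    \<lparr> fo = (\<lambda>x. fst x), fm = (\<lambda>u. fst (snd u)), lu = sl_q C E M e, lm = sl_qT C E M m \<rparr>"

definition slice_tau :: "('o,'m) sobj \<Rightarrow> 'm" where
  "slice_tau x = snd x"

end

theory Submission
  imports Defs
begin

locale skc =
  fixes C :: "('o,'m,'z) skewcat_scheme"
  assumes skew: "is_skew C"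
begin

abbreviation cp (infixr "\<cdot>" 55) where "g \<cdot> f \<equiv> ccomp C g f"
abbreviation tm (infixl "\<otimes>" 60) where "f \<otimes> g \<equiv> tensm C f g"
abbreviation "Ar \<equiv> carr C"
abbreviation "Ob \<equiv> cobj C"
abbreviation "dm \<equiv> cdom C"
abbreviation "cd \<equiv> ccod C"
abbreviation "ii \<equiv> cid C"
abbreviation "tn \<equiv> tens C"
abbreviation "I0 \<equiv> tunit C"


lemmas sk0 = skew[unfolded is_skew_def Let_def, THEN conjunct1]
lemmas sk1 = skew[unfolded is_skew_def Let_def, THEN conjunct2, THEN conjunct1]
lemmas sk2 = skew[unfolded is_skew_def Let_def, THEN conjunct2, THEN conjunct2, THEN conjunct1]
lemmas sk3 = skew[unfolded is_skew_def Let_def, THEN conjunct2, THEN conjunct2, THEN conjunct2, THEN conjunct1]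
lemmas sk4 = skew[unfolded is_skew_def Let_def, THEN conjunct2, THEN conjunct2, THEN conjunct2, THEN conjunct2, THEN conjunct1]
lemmas sk5 = skew[unfolded is_skew_def Let_def, THEN conjunct2, THEN conjunct2, THEN conjunct2, THEN conjunct2, THEN conjunct2, THEN conjunct1]
lemmas sk6 = skew[unfolded is_skew_def Let_def, THEN conjunct2, THEN conjunct2, THEN conjunct2, THEN conjunct2, THEN conjunct2, THEN conjunct2, THEN conjunct1]
lemmas sk7 = skew[unfolded is_skew_def Let_def, THEN conjunct2, THEN conjunct2, THEN conjunct2, THEN conjunct2, THEN conjunct2, THEN conjunct2, THEN conjunct2, THEN conjunct1]
lemmas sk8 = skew[unfolded is_skew_def Let_def, THEN conjunct2, THEN conjunct2, THEN conjunct2, THEN conjunct2, THEN conjunct2, THEN conjunct2, THEN conjunct2, THEN conjunct2, THEN conjunct1]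
lemmas sk9 = skew[unfolded is_skew_def Let_def, THEN conjunct2, THEN conjunct2, THEN conjunct2, THEN conjunct2, THEN conjunct2, THEN conjunct2, THEN conjunct2, THEN conjunct2, THEN conjunct2, THEN conjunct1]
lemmas sk10 = skew[unfolded is_skew_def Let_def, THEN conjunct2, THEN conjunct2, THEN conjunct2, THEN conjunct2, THEN conjunct2, THEN conjunct2, THEN conjunct2, THEN conjunct2, THEN conjunct2, THEN conjunct2, THEN conjunct1]
lemmas sk11 = skew[unfolded is_skew_def Let_def, THEN conjunct2, THEN conjunct2, THEN conjunct2, THEN conjunct2, THEN conjunct2, THEN conjunct2, THEN conjunct2, THEN conjunct2, THEN conjunct2, THEN conjunct2, THEN conjunct2, THEN conjunct1]
lemmas sk12 = skew[unfolded is_skew_def Let_def, THEN conjunct2, THEN conjunct2, THEN conjunct2, THEN conjunct2, THEN conjunct2, THEN conjunct2, THEN conjunct2, THEN conjunct2, THEN conjunct2, THEN conjunct2, THEN conjunct2, THEN conjunct2, THEN conjunct1]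
lemmas sk13 = skew[unfolded is_skew_def Let_def, THEN conjunct2, THEN conjunct2, THEN conjunct2, THEN conjunct2, THEN conjunct2, THEN conjunct2, THEN conjunct2, THEN conjunct2, THEN conjunct2, THEN conjunct2, THEN conjunct2, THEN conjunct2, THEN conjunct2, THEN conjunct1]
lemmas sk14 = skew[unfolded is_skew_def Let_def, THEN conjunct2, THEN conjunct2, THEN conjunct2, THEN conjunct2, THEN conjunct2, THEN conjunct2, THEN conjunct2, THEN conjunct2, THEN conjunct2, THEN conjunct2, THEN conjunct2, THEN conjunct2, THEN conjunct2, THEN conjunct2, THEN conjunct1]
lemmas sk15 = skew[unfolded is_skew_def Let_def, THEN conjunct2, THEN conjunct2, THEN conjunct2, THEN conjunct2, THEN conjunct2, THEN conjunct2, THEN conjunct2, THEN conjunct2, THEN conjunct2, THEN conjunct2, THEN conjunct2, THEN conjunct2, THEN conjunct2, THEN conjunct2, THEN conjunct2]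

lemma cat: "is_category C" using sk0 by blast

lemma dom_ob[simp]: "f \<in> Ar \<Longrightarrow> dm f \<in> Ob" using cat unfolding is_category_def by blast
lemma cod_ob[simp]: "f \<in> Ar \<Longrightarrow> cd f \<in> Ob" using cat unfolding is_category_def by blast
lemma id_ar[simp]: "a \<in> Ob \<Longrightarrow> ii a \<in> Ar" using cat unfolding is_category_def hom_def by blast
lemma id_dom[simp]: "a \<in> Ob \<Longrightarrow> dm (ii a) = a" using cat unfolding is_category_def hom_def by blast
lemma id_cod[simp]: "a \<in> Ob \<Longrightarrow> cd (ii a) = a" using cat unfolding is_category_def hom_def by blast
lemma comp_ar[simp]: "f \<in> Ar \<Longrightarrow> g \<in> Ar \<Longrightarrow> dm g = cd f \<Longrightarrow> g \<cdot> f \<in> Ar"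
  using cat unfolding is_category_def hom_def by blast
lemma comp_dom[simp]: "f \<in> Ar \<Longrightarrow> g \<in> Ar \<Longrightarrow> dm g = cd f \<Longrightarrow> dm (g \<cdot> f) = dm f"
  using cat unfolding is_category_def hom_def by blast
lemma comp_cod[simp]: "f \<in> Ar \<Longrightarrow> g \<in> Ar \<Longrightarrow> dm g = cd f \<Longrightarrow> cd (g \<cdot> f) = cd g"
  using cat unfolding is_category_def hom_def by blast
lemma id_l[simp]: "f \<in> Ar \<Longrightarrow> cd f = a \<Longrightarrow> ii a \<cdot> f = f"
  using cat unfolding is_category_def by blast
lemma id_r[simp]: "f \<in> Ar \<Longrightarrow> dm f = a \<Longrightarrow> f \<cdot> ii a = f"
  using cat unfolding is_category_def by blast
lemma assoc[simp]: "f \<in> Ar \<Longrightarrow> g \<in> Ar \<Longrightarrow> h \<in> Ar \<Longrightarrow> dm g = cd f \<Longrightarrow> dm h = cd g \<Longrightarrow>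
   (h \<cdot> g) \<cdot> f = h \<cdot> (g \<cdot> f)"
  using cat unfolding is_category_def by metis

lemma unit_ob[simp]: "I0 \<in> Ob" using sk1 by blast
lemma tens_ob[simp]: "a \<in> Ob \<Longrightarrow> b \<in> Ob \<Longrightarrow> tn a b \<in> Ob" using sk2 by blast
lemma tm_ar[simp]: "f \<in> Ar \<Longrightarrow> g \<in> Ar \<Longrightarrow> f \<otimes> g \<in> Ar" using sk0 sk1 sk2 sk3 sk4 sk5 sk6 sk7 unfolding hom_def by blast
lemma tm_dom[simp]: "f \<in> Ar \<Longrightarrow> g \<in> Ar \<Longrightarrow> dm (f \<otimes> g) = tn (dm f) (dm g)" using sk0 sk1 sk2 sk3 sk4 sk5 sk6 sk7 unfolding hom_def by blast
lemma tm_cod[simp]: "f \<in> Ar \<Longrightarrow> g \<in> Ar \<Longrightarrow> cd (f \<otimes> g) = tn (cd f) (cd g)" using sk0 sk1 sk2 sk3 sk4 sk5 sk6 sk7 unfolding hom_def by blast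
lemma tm_id[simp]: "a \<in> Ob \<Longrightarrow> b \<in> Ob \<Longrightarrow> ii a \<otimes> ii b = ii (tn a b)" using sk4 by blast
lemma tm_comp[simp]: "f \<in> Ar \<Longrightarrow> g \<in> Ar \<Longrightarrow> f' \<in> Ar \<Longrightarrow> g' \<in> Ar \<Longrightarrow> dm g = cd f \<Longrightarrow> dm g' = cd f' \<Longrightarrow>
   (g \<otimes> g') \<cdot> (f \<otimes> f') = (g \<cdot> f) \<otimes> (g' \<cdot> f')"
  using sk5 by metis
lemma tm_comp_k[simp]: "f \<in> Ar \<Longrightarrow> g \<in> Ar \<Longrightarrow> f' \<in> Ar \<Longrightarrow> g' \<in> Ar \<Longrightarrow> dm g = cd f \<Longrightarrow> dm g' = cd f' \<Longrightarrow>
   k \<in> Ar \<Longrightarrow> cd k = tn (dm f) (dm f') \<Longrightarrow>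
   (g \<otimes> g') \<cdot> ((f \<otimes> f') \<cdot> k) = ((g \<cdot> f) \<otimes> (g' \<cdot> f')) \<cdot> k"
  by (subst assoc[symmetric]) (simp_all)

lemma lam_ar[simp]: "a \<in> Ob \<Longrightarrow> lam C a \<in> Ar" using sk0 sk1 sk2 sk3 sk4 sk5 sk6 sk7 unfolding hom_def by blast
lemma lam_dom[simp]: "a \<in> Ob \<Longrightarrow> dm (lam C a) = tn I0 a" using sk0 sk1 sk2 sk3 sk4 sk5 sk6 sk7 unfolding hom_def by blast
lemma lam_cod[simp]: "a \<in> Ob \<Longrightarrow> cd (lam C a) = a" using sk0 sk1 sk2 sk3 sk4 sk5 sk6 sk7 unfolding hom_def by blast
lemma rho_ar[simp]: "a \<in> Ob \<Longrightarrow> rho C a \<in> Ar" using sk0 sk1 sk2 sk3 sk4 sk5 sk6 sk7 unfolding hom_def by blast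
lemma rho_dom[simp]: "a \<in> Ob \<Longrightarrow> dm (rho C a) = a" using sk0 sk1 sk2 sk3 sk4 sk5 sk6 sk7 unfolding hom_def by blast
lemma rho_cod[simp]: "a \<in> Ob \<Longrightarrow> cd (rho C a) = tn a I0" using sk0 sk1 sk2 sk3 sk4 sk5 sk6 sk7 unfolding hom_def by blast
lemma al_ar[simp]: "a \<in> Ob \<Longrightarrow> b \<in> Ob \<Longrightarrow> c \<in> Ob \<Longrightarrow> alph C a b c \<in> Ar" using sk0 sk1 sk2 sk3 sk4 sk5 sk6 sk7 unfolding hom_def by blast
lemma al_dom[simp]: "a \<in> Ob \<Longrightarrow> b \<in> Ob \<Longrightarrow> c \<in> Ob \<Longrightarrow> dm (alph C a b c) = tn (tn a b) c" using sk0 sk1 sk2 sk3 sk4 sk5 sk6 sk7 unfolding hom_def by blast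
lemma al_cod[simp]: "a \<in> Ob \<Longrightarrow> b \<in> Ob \<Longrightarrow> c \<in> Ob \<Longrightarrow> cd (alph C a b c) = tn a (tn b c)" using sk0 sk1 sk2 sk3 sk4 sk5 sk6 sk7 unfolding hom_def by blast

lemma lam_nat: "f \<in> Ar \<Longrightarrow> dm f = a \<Longrightarrow> cd f = b \<Longrightarrow> f \<cdot> lam C a = lam C b \<cdot> (ii I0 \<otimes> f)"
  using sk8 by blast
lemma rho_nat: "f \<in> Ar \<Longrightarrow> dm f = a \<Longrightarrow> cd f = b \<Longrightarrow> (f \<otimes> ii I0) \<cdot> rho C a = rho C b \<cdot> f"
  using sk9 by blast
lemma al_nat: "f \<in> Ar \<Longrightarrow> g \<in> Ar \<Longrightarrow> h \<in> Ar \<Longrightarrow>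
  (f \<otimes> (g \<otimes> h)) \<cdot> alph C (dm f) (dm g) (dm h) = alph C (cd f) (cd g) (cd h) \<cdot> ((f \<otimes> g) \<otimes> h)"
  using sk10 by blast
lemma ax_lr: "lam C I0 \<cdot> rho C I0 = ii I0"
  using sk11 by blast
lemma ax_tri: "x \<in> Ob \<Longrightarrow> y \<in> Ob \<Longrightarrow> (ii x \<otimes> lam C y) \<cdot> (alph C x I0 y \<cdot> (rho C x \<otimes> ii y)) = ii (tn x y)"
  using sk12 by blast
lemma ax_la: "x \<in> Ob \<Longrightarrow> y \<in> Ob \<Longrightarrow> lam C (tn x y) \<cdot> alph C I0 x y = lam C x \<otimes> ii y"
  using sk13 by blast
lemma ax_ar: "x \<in> Ob \<Longrightarrow> y \<in> Ob \<Longrightarrow> alph C x y I0 \<cdot> rho C (tn x y) = ii x \<otimes> rho C y"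
  using sk14 by blast
lemma ax_pent: "x \<in> Ob \<Longrightarrow> y \<in> Ob \<Longrightarrow> z \<in> Ob \<Longrightarrow> w \<in> Ob \<Longrightarrow>
   (ii x \<otimes> alph C y z w) \<cdot> (alph C x (tn y z) w \<cdot> (alph C x y z \<otimes> ii w))
        = alph C x y (tn z w) \<cdot> alph C (tn x y) z w"
  using sk15 by blast

end

locale ctx = skc C for C :: "('o,'m,'z) skewcat_scheme" +
  fixes T :: 'o and e m :: 'm and E M :: "'m set"
  assumes monoid: "is_monoid C T e m"
    and ofs: "is_ofs C E M"
    and Eclosed: "\<forall>x\<in>sl_obj C M T. \<forall>h\<in>E. tensm C h (cid C (fst x)) \<in> E"
begin

abbreviation "SO \<equiv> sl_obj C M T"
abbreviation "SA \<equiv> sl_arr C M T"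
abbreviation "Q \<equiv> sl_qT C E M m"
abbreviation "bx \<equiv> sl_tens C E M m"
abbreviation "U \<equiv> sl_unit C E M e"
abbreviation "q0 \<equiv> sl_q C E M e"

lemmas of0 = ofs[unfolded is_ofs_def Let_def, THEN conjunct1]
lemmas of1 = ofs[unfolded is_ofs_def Let_def, THEN conjunct2, THEN conjunct1]
lemmas of2 = ofs[unfolded is_ofs_def Let_def, THEN conjunct2, THEN conjunct2, THEN conjunct1]
lemmas of3 = ofs[unfolded is_ofs_def Let_def, THEN conjunct2, THEN conjunct2, THEN conjunct2, THEN conjunct1]
lemmas of4 = ofs[unfolded is_ofs_def Let_def, THEN conjunct2, THEN conjunct2, THEN conjunct2, THEN conjunct2, THEN conjunct1]
lemmas of5 = ofs[unfolded is_ofs_def Let_def, THEN conjunct2, THEN conjunct2, THEN conjunct2, THEN conjunct2, THEN conjunct2, THEN conjunct1]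
lemmas of6 = ofs[unfolded is_ofs_def Let_def, THEN conjunct2, THEN conjunct2, THEN conjunct2, THEN conjunct2, THEN conjunct2, THEN conjunct2, THEN conjunct1]
lemmas of7 = ofs[unfolded is_ofs_def Let_def, THEN conjunct2, THEN conjunct2, THEN conjunct2, THEN conjunct2, THEN conjunct2, THEN conjunct2, THEN conjunct2]

lemma E_ar[simp]: "h \<in> E \<Longrightarrow> h \<in> Ar" using of0 by blast
lemma M_ar[simp]: "h \<in> M \<Longrightarrow> h \<in> Ar" using of1 by blast
lemma iso_E: "is_iso C f \<Longrightarrow> f \<in> E" using of2 by auto
lemma iso_M: "is_iso C f \<Longrightarrow> f \<in> M" using of3 by auto
lemma E_comp[simp]: "f \<in> E \<Longrightarrow> g \<in> E \<Longrightarrow> dm g = cd f \<Longrightarrow> g \<cdot> f \<in> E" using of4 by blast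
lemma M_comp[simp]: "f \<in> M \<Longrightarrow> g \<in> M \<Longrightarrow> dm g = cd f \<Longrightarrow> g \<cdot> f \<in> M" using of5 by blast
lemma diag_ex1: "e' \<in> E \<Longrightarrow> n \<in> M \<Longrightarrow> f \<in> Ar \<Longrightarrow> g \<in> Ar \<Longrightarrow>
        dm f = dm e' \<Longrightarrow> cd f = dm n \<Longrightarrow> dm g = cd e' \<Longrightarrow> cd g = cd n \<Longrightarrow> g \<cdot> e' = n \<cdot> f \<Longrightarrow>
        (\<exists>!d. d \<in> hom C (cd e') (dm n) \<and> d \<cdot> e' = f \<and> n \<cdot> d = g)"
  using of6 by blast
lemma fact_ex: "h \<in> Ar \<Longrightarrow> \<exists>e'\<in>E. \<exists>n\<in>M. dm n = cd e' \<and> n \<cdot> e' = h" using of7 by blast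

lemma diag_unique:
  assumes "e' \<in> E" "n \<in> M" "d1 \<in> Ar" "d2 \<in> Ar" "dm d1 = cd e'" "dm d2 = cd e'" "cd d1 = dm n" "cd d2 = dm n"
    "d1 \<cdot> e' = d2 \<cdot> e'" "n \<cdot> d1 = n \<cdot> d2"
  shows "d1 = d2"
proof -
  have ex: "\<exists>!d. d \<in> hom C (cd e') (dm n) \<and> d \<cdot> e' = d1 \<cdot> e' \<and> n \<cdot> d = n \<cdot> d1"
    by (rule diag_ex1) (use assms in simp_all)
  have h1: "d1 \<in> hom C (cd e') (dm n) \<and> d1 \<cdot> e' = d1 \<cdot> e' \<and> n \<cdot> d1 = n \<cdot> d1"
    using assms unfolding hom_def by simp
  have h2: "d2 \<in> hom C (cd e') (dm n) \<and> d2 \<cdot> e' = d1 \<cdot> e' \<and> n \<cdot> d2 = n \<cdot> d1"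
    using assms unfolding hom_def by simp
  show ?thesis using ex h1 h2 by (metis (no_types, lifting))
qed
end
context ctx begin
lemma diag_some:
  assumes "e' \<in> E" "n \<in> M" "f \<in> Ar" "g \<in> Ar"
        "dm f = dm e'" "cd f = dm n" "dm g = cd e'" "cd g = cd n" "g \<cdot> e' = n \<cdot> f"
        "A = cd e'" "B = dm n"
  shows "(SOME d. d \<in> hom C A B \<and> d \<cdot> e' = f \<and> n \<cdot> d = g) \<in> hom C A B \<and>
         (SOME d. d \<in> hom C A B \<and> d \<cdot> e' = f \<and> n \<cdot> d = g) \<cdot> e' = f \<and>
         n \<cdot> (SOME d. d \<in> hom C A B \<and> d \<cdot> e' = f \<and> n \<cdot> d = g) = g"
proof -
  have "\<exists>!d. d \<in> hom C (cd e') (dm n) \<and> d \<cdot> e' = f \<and> n \<cdot> d = g"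
    by (rule diag_ex1) (use assms in simp_all)
  then show ?thesis using assms by (metis (mono_tags, lifting) someI_ex)
qed

lemma some_eq:
  assumes "e' \<in> E" "n \<in> M" "d0 \<in> hom C A B" "d0 \<cdot> e' = f" "n \<cdot> d0 = g" "A = cd e'" "B = dm n"
  shows "(SOME d. d \<in> hom C A B \<and> d \<cdot> e' = f \<and> n \<cdot> d = g) = d0"
proof (rule some_equality)
  show "d0 \<in> hom C A B \<and> d0 \<cdot> e' = f \<and> n \<cdot> d0 = g" using assms by simp
  fix d assume d: "d \<in> hom C A B \<and> d \<cdot> e' = f \<and> n \<cdot> d = g"
  show "d = d0"
    by (rule diag_unique[OF assms(1,2)]) (use assms d in \<open>auto simp: hom_def\<close>)
qed

lemma fact_props:
  assumes "h \<in> Ar"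
  shows "fst (fact C E M h) \<in> E" "snd (fact C E M h) \<in> M"
    "dm (snd (fact C E M h)) = cd (fst (fact C E M h))"
    "snd (fact C E M h) \<cdot> fst (fact C E M h) = h"
proof -
  have "\<exists>p. (case p of (q,n) \<Rightarrow> q \<in> E \<and> n \<in> M \<and> dm n = cd q \<and> n \<cdot> q = h)"
    using fact_ex[OF assms] by auto
  then have "(case fact C E M h of (q,n) \<Rightarrow> q \<in> E \<and> n \<in> M \<and> dm n = cd q \<and> n \<cdot> q = h)"
    unfolding fact_def by (rule someI_ex)
  then show "fst (fact C E M h) \<in> E" "snd (fact C E M h) \<in> M"
    "dm (snd (fact C E M h)) = cd (fst (fact C E M h))"
    "snd (fact C E M h) \<cdot> fst (fact C E M h) = h" by (auto split: prod.splits)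
qed

lemma fact_dom: "h \<in> Ar \<Longrightarrow> dm (fst (fact C E M h)) = dm h"
  using fact_props[of h] comp_dom[of "fst (fact C E M h)" "snd (fact C E M h)"] by simp
lemma fact_cod: "h \<in> Ar \<Longrightarrow> cd (snd (fact C E M h)) = cd h"
  using fact_props[of h] comp_cod[of "fst (fact C E M h)" "snd (fact C E M h)"] by simp

lemmas mon = monoid[unfolded is_monoid_def Let_def]
lemma T_ob[simp]: "T \<in> Ob" using mon by blast
lemma e_ar[simp]: "e \<in> Ar" and e_dom[simp]: "dm e = I0" and e_cod[simp]: "cd e = T"
  using mon unfolding hom_def by blast+
lemma m_ar[simp]: "m \<in> Ar" and m_dom[simp]: "dm m = tn T T" and m_cod[simp]: "cd m = T"
  using mon unfolding hom_def by blast+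
lemma mon_l: "m \<cdot> (e \<otimes> ii T) = lam C T" using mon by blast
lemma mon_r: "m \<cdot> ((ii T \<otimes> e) \<cdot> rho C T) = ii T" using mon by blast
lemma mon_a: "m \<cdot> (m \<otimes> ii T) = m \<cdot> ((ii T \<otimes> m) \<cdot> alph C T T T)" using mon by blast

lemma SO_iff: "x \<in> SO \<longleftrightarrow> snd x \<in> M \<and> dm (snd x) = fst x \<and> cd (snd x) = T"
  unfolding sl_obj_def by (cases x) auto
lemma SO_M[simp]: "x \<in> SO \<Longrightarrow> snd x \<in> M" and SO_ar[simp]: "x \<in> SO \<Longrightarrow> snd x \<in> Ar"
  and SO_dom[simp]: "x \<in> SO \<Longrightarrow> dm (snd x) = fst x" and SO_cod[simp]: "x \<in> SO \<Longrightarrow> cd (snd x) = T"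
  using SO_iff by auto
lemma SO_ob[simp]: "x \<in> SO \<Longrightarrow> fst x \<in> Ob" using dom_ob[of "snd x"] by simp

lemma Q_facts:
  assumes "x \<in> SO" "y \<in> SO"
  shows "Q x y \<in> E" "bx x y \<in> SO" "dm (Q x y) = tn (fst x) (fst y)" "cd (Q x y) = fst (bx x y)"
        "snd (bx x y) \<cdot> Q x y = m \<cdot> (snd x \<otimes> snd y)"
proof -
  let ?h = "m \<cdot> (snd x \<otimes> snd y)"
  have h: "?h \<in> Ar" "dm ?h = tn (fst x) (fst y)" "cd ?h = T" using assms by simp_all
  note fp = fact_props[OF h(1)] fact_dom[OF h(1)] fact_cod[OF h(1)]
  have bx: "bx x y = (cd (fst (fact C E M ?h)), snd (fact C E M ?h))" unfolding sl_tens_def Let_def by simp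
  have Qd: "Q x y = fst (fact C E M ?h)" unfolding sl_qT_def by simp
  show "Q x y \<in> E" "dm (Q x y) = tn (fst x) (fst y)" "cd (Q x y) = fst (bx x y)"
       "snd (bx x y) \<cdot> Q x y = m \<cdot> (snd x \<otimes> snd y)"
    unfolding Qd bx using fp h by simp_all
  show "bx x y \<in> SO" unfolding SO_iff bx using fp h by simp
qed

lemmas [simp] = Q_facts(1-4)
lemma Q_ar[simp]: "x \<in> SO \<Longrightarrow> y \<in> SO \<Longrightarrow> Q x y \<in> Ar" by simp
lemma Q_def1: "x \<in> SO \<Longrightarrow> y \<in> SO \<Longrightarrow> snd (bx x y) \<cdot> Q x y = m \<cdot> (snd x \<otimes> snd y)"
  by (rule Q_facts(5))

lemma U_facts:
  shows "q0 \<in> E" "U \<in> SO" "dm q0 = I0" "cd q0 = fst U" "snd U \<cdot> q0 = e"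
proof -
  note fp = fact_props[OF e_ar] fact_dom[OF e_ar] fact_cod[OF e_ar]
  have Ud: "U = (cd (fst (fact C E M e)), snd (fact C E M e))" unfolding sl_unit_def by simp
  have qd: "q0 = fst (fact C E M e)" unfolding sl_q_def by simp
  show "q0 \<in> E" "dm q0 = I0" "cd q0 = fst U" "snd U \<cdot> q0 = e" unfolding qd Ud using fp by simp_all
  show "U \<in> SO" unfolding SO_iff Ud using fp by simp
qed
lemmas [simp] = U_facts(1-4)
lemma q0_ar[simp]: "q0 \<in> Ar" by simp

lemma Eclosed': "x \<in> SO \<Longrightarrow> h \<in> E \<Longrightarrow> h \<otimes> ii (fst x) \<in> E" using Eclosed by blast

end
context ctx begin

lemma kext: "a \<cdot> b = c \<Longrightarrow> a \<in> Ar \<Longrightarrow> b \<in> Ar \<Longrightarrow> k \<in> Ar \<Longrightarrow> dm a = cd b \<Longrightarrow> dm b = cd k \<Longrightarrow>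
  a \<cdot> (b \<cdot> k) = c \<cdot> k"
  by (metis assoc)

lemmas Q_def1_k[simp] = kext[OF Q_def1]
lemmas [simp] = Q_def1
lemmas [simp] = U_facts(5)
lemmas U_k[simp] = kext[OF U_facts(5)]

lemma SA_iff: "u \<in> SA \<longleftrightarrow> fst u \<in> SO \<and> snd (snd u) \<in> SO \<and> fst (snd u) \<in> Ar \<and>
   dm (fst (snd u)) = fst (fst u) \<and> cd (fst (snd u)) = fst (snd (snd u)) \<and>
   snd (snd (snd u)) \<cdot> fst (snd u) = snd (fst u)"
  unfolding sl_arr_def hom_def by (cases u) auto

lemma SA3: "(x,f,y) \<in> SA \<longleftrightarrow> x \<in> SO \<and> y \<in> SO \<and> f \<in> Ar \<and> dm f = fst x \<and> cd f = fst y \<and> snd y \<cdot> f = snd x"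
  unfolding SA_iff by simp

definition "BX x f y x' f' y' = fst (snd (sl_tensm C E M m (x,f,y) (x',f',y')))"

lemma BX_facts:
  assumes "(x,f,y) \<in> SA" "(x',f',y') \<in> SA"
  shows "sl_tensm C E M m (x,f,y) (x',f',y') = (bx x x', BX x f y x' f' y', bx y y')"
    "BX x f y x' f' y' \<in> Ar" "dm (BX x f y x' f' y') = fst (bx x x')"
    "cd (BX x f y x' f' y') = fst (bx y y')"
    "BX x f y x' f' y' \<cdot> Q x x' = Q y y' \<cdot> (f \<otimes> f')"
    "snd (bx y y') \<cdot> BX x f y x' f' y' = snd (bx x x')"
proof -
  have a: "x \<in> SO" "y \<in> SO" "f \<in> Ar" "dm f = fst x" "cd f = fst y" "snd y \<cdot> f = snd x"
          "x' \<in> SO" "y' \<in> SO" "f' \<in> Ar" "dm f' = fst x'" "cd f' = fst y'" "snd y' \<cdot> f' = snd x'"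
    using assms unfolding SA3 by auto
  define d where "d = (SOME d. d \<in> hom C (fst (bx x x')) (fst (bx y y')) \<and> d \<cdot> Q x x' = Q y y' \<cdot> (f \<otimes> f') \<and>
               snd (bx y y') \<cdot> d = snd (bx x x'))"
  have D: "sl_tensm C E M m (x,f,y) (x',f',y') = (bx x x', d, bx y y')"
    unfolding sl_tensm_def Let_def d_def by simp
  have eq: "snd (bx x x') \<cdot> Q x x' = snd (bx y y') \<cdot> (Q y y' \<cdot> (f \<otimes> f'))"
    using a by simp
  have ds: "d \<in> hom C (fst (bx x x')) (fst (bx y y')) \<and> d \<cdot> Q x x' = Q y y' \<cdot> (f \<otimes> f') \<and>
               snd (bx y y') \<cdot> d = snd (bx x x')"
    unfolding d_def by (rule diag_some) (use a eq in simp_all)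
  show "sl_tensm C E M m (x,f,y) (x',f',y') = (bx x x', BX x f y x' f' y', bx y y')" using D by (simp add: BX_def)
  show "BX x f y x' f' y' \<in> Ar" "dm (BX x f y x' f' y') = fst (bx x x')"
    "cd (BX x f y x' f' y') = fst (bx y y')"
    "BX x f y x' f' y' \<cdot> Q x x' = Q y y' \<cdot> (f \<otimes> f')"
    "snd (bx y y') \<cdot> BX x f y x' f' y' = snd (bx x x')"
    unfolding BX_def D using ds by (simp_all add: hom_def)
qed


lemma id_SA[simp]: "x \<in> SO \<Longrightarrow> (x, ii (fst x), x) \<in> SA" unfolding SA3 by simp

definition "LM x = fst (snd (sl_lam C E M e m x))"

lemma LM_facts:
  assumes x: "x \<in> SO"
  shows "sl_lam C E M e m x = (bx U x, LM x, x)" "LM x \<in> Ar" "dm (LM x) = fst (bx U x)" "cd (LM x) = fst x"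
    "LM x \<cdot> (Q U x \<cdot> (q0 \<otimes> ii (fst x))) = lam C (fst x)" "snd x \<cdot> LM x = snd (bx U x)"
proof -
  define d where "d = (SOME d. d \<in> hom C (fst (bx U x)) (fst x) \<and>
               d \<cdot> (Q U x \<cdot> (q0 \<otimes> ii (fst x))) = lam C (fst x) \<and> snd x \<cdot> d = snd (bx U x))"
  have D: "sl_lam C E M e m x = (bx U x, d, x)"
    unfolding sl_lam_def Let_def d_def by simp
  have "snd x \<cdot> lam C (fst x) = lam C T \<cdot> (ii I0 \<otimes> snd x)" by (rule lam_nat) (use x in simp_all)
  also have "\<dots> = (m \<cdot> (e \<otimes> ii T)) \<cdot> (ii I0 \<otimes> snd x)" by (simp add: mon_l)
  also have "\<dots> = snd (bx U x) \<cdot> (Q U x \<cdot> (q0 \<otimes> ii (fst x)))" using x by simp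
  finally have eq: "snd (bx U x) \<cdot> (Q U x \<cdot> (q0 \<otimes> ii (fst x))) = snd x \<cdot> lam C (fst x)" ..
  have E1: "Q U x \<cdot> (q0 \<otimes> ii (fst x)) \<in> E" using x by (simp add: Eclosed')
  have ds: "d \<in> hom C (fst (bx U x)) (fst x) \<and>
               d \<cdot> (Q U x \<cdot> (q0 \<otimes> ii (fst x))) = lam C (fst x) \<and> snd x \<cdot> d = snd (bx U x)"
    unfolding d_def by (rule diag_some) (use x eq E1 in simp_all)
  show "sl_lam C E M e m x = (bx U x, LM x, x)" using D by (simp add: LM_def)
  show "LM x \<in> Ar" "dm (LM x) = fst (bx U x)" "cd (LM x) = fst x"
    "LM x \<cdot> (Q U x \<cdot> (q0 \<otimes> ii (fst x))) = lam C (fst x)" "snd x \<cdot> LM x = snd (bx U x)"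
    unfolding LM_def D using ds by (simp_all add: hom_def)
qed

definition "RH x = Q x U \<cdot> ((ii (fst x) \<otimes> q0) \<cdot> rho C (fst x))"

lemma RH_facts:
  assumes x: "x \<in> SO"
  shows "sl_rho C E M e m x = (x, RH x, bx x U)" "RH x \<in> Ar" "dm (RH x) = fst x" "cd (RH x) = fst (bx x U)"
    "snd (bx x U) \<cdot> RH x = snd x"
proof -
  show "sl_rho C E M e m x = (x, RH x, bx x U)" unfolding sl_rho_def RH_def Let_def by simp
  show "RH x \<in> Ar" "dm (RH x) = fst x" "cd (RH x) = fst (bx x U)" unfolding RH_def using x by simp_all
  have "snd (bx x U) \<cdot> RH x = (m \<cdot> (ii T \<otimes> e)) \<cdot> ((snd x \<otimes> ii I0) \<cdot> rho C (fst x))"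
    unfolding RH_def using x by simp
  also have "\<dots> = (m \<cdot> (ii T \<otimes> e)) \<cdot> (rho C T \<cdot> snd x)" using x by (simp add: rho_nat)
  also have "\<dots> = (m \<cdot> ((ii T \<otimes> e) \<cdot> rho C T)) \<cdot> snd x" using x by simp
  also have "\<dots> = snd x" using x by (simp add: mon_r)
  finally show "snd (bx x U) \<cdot> RH x = snd x" .
qed

definition "AL x y z = fst (snd (sl_alph C E M m x y z))"

lemma AL_facts:
  assumes x: "x \<in> SO" and y: "y \<in> SO" and z: "z \<in> SO"
  shows "sl_alph C E M m x y z = (bx (bx x y) z, AL x y z, bx x (bx y z))" "AL x y z \<in> Ar"
    "dm (AL x y z) = fst (bx (bx x y) z)" "cd (AL x y z) = fst (bx x (bx y z))"
    "AL x y z \<cdot> (Q (bx x y) z \<cdot> (Q x y \<otimes> ii (fst z)))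
        = Q x (bx y z) \<cdot> ((ii (fst x) \<otimes> Q y z) \<cdot> alph C (fst x) (fst y) (fst z))"
    "snd (bx x (bx y z)) \<cdot> AL x y z = snd (bx (bx x y) z)"
proof -
  define d where "d = (SOME d. d \<in> hom C (fst (bx (bx x y) z)) (fst (bx x (bx y z))) \<and>
               d \<cdot> (Q (bx x y) z \<cdot> (Q x y \<otimes> ii (fst z)))
                 = Q x (bx y z) \<cdot> ((ii (fst x) \<otimes> Q y z) \<cdot> alph C (fst x) (fst y) (fst z)) \<and>
               snd (bx x (bx y z)) \<cdot> d = snd (bx (bx x y) z))"
  have D: "sl_alph C E M m x y z = (bx (bx x y) z, d, bx x (bx y z))"
    unfolding sl_alph_def Let_def d_def by simp
  have "snd (bx (bx x y) z) \<cdot> (Q (bx x y) z \<cdot> (Q x y \<otimes> ii (fst z)))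
      = (m \<cdot> (m \<otimes> ii T)) \<cdot> ((snd x \<otimes> snd y) \<otimes> snd z)" using x y z by simp
  also have "\<dots> = (m \<cdot> ((ii T \<otimes> m) \<cdot> alph C T T T)) \<cdot> ((snd x \<otimes> snd y) \<otimes> snd z)"
    by (simp only: mon_a)
  also have "\<dots> = m \<cdot> ((ii T \<otimes> m) \<cdot> (alph C T T T \<cdot> ((snd x \<otimes> snd y) \<otimes> snd z)))" using x y z by simp
  also have "\<dots> = m \<cdot> ((ii T \<otimes> m) \<cdot> ((snd x \<otimes> (snd y \<otimes> snd z)) \<cdot> alph C (fst x) (fst y) (fst z)))"
    using al_nat[of "snd x" "snd y" "snd z"] x y z by simp
  also have "\<dots> = snd (bx x (bx y z)) \<cdot> (Q x (bx y z) \<cdot> ((ii (fst x) \<otimes> Q y z) \<cdot> alph C (fst x) (fst y) (fst z)))"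
    using x y z by simp
  finally have eq: "snd (bx (bx x y) z) \<cdot> (Q (bx x y) z \<cdot> (Q x y \<otimes> ii (fst z))) =
     snd (bx x (bx y z)) \<cdot> (Q x (bx y z) \<cdot> ((ii (fst x) \<otimes> Q y z) \<cdot> alph C (fst x) (fst y) (fst z)))" .
  have E1: "Q (bx x y) z \<cdot> (Q x y \<otimes> ii (fst z)) \<in> E" using x y z by (simp add: Eclosed')
  have ds: "d \<in> hom C (fst (bx (bx x y) z)) (fst (bx x (bx y z))) \<and>
               d \<cdot> (Q (bx x y) z \<cdot> (Q x y \<otimes> ii (fst z)))
                 = Q x (bx y z) \<cdot> ((ii (fst x) \<otimes> Q y z) \<cdot> alph C (fst x) (fst y) (fst z)) \<and>
               snd (bx x (bx y z)) \<cdot> d = snd (bx (bx x y) z)"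
    unfolding d_def by (rule diag_some) (use x y z eq E1 in simp_all)
  show "sl_alph C E M m x y z = (bx (bx x y) z, AL x y z, bx x (bx y z))" using D by (simp add: AL_def)
  show "AL x y z \<in> Ar"
    "dm (AL x y z) = fst (bx (bx x y) z)" "cd (AL x y z) = fst (bx x (bx y z))"
    "AL x y z \<cdot> (Q (bx x y) z \<cdot> (Q x y \<otimes> ii (fst z)))
        = Q x (bx y z) \<cdot> ((ii (fst x) \<otimes> Q y z) \<cdot> alph C (fst x) (fst y) (fst z))"
    "snd (bx x (bx y z)) \<cdot> AL x y z = snd (bx (bx x y) z)"
    unfolding AL_def D using ds by (simp_all add: hom_def)
qed

end
context ctx begin

lemma al_nat': "f \<in> Ar \<Longrightarrow> g \<in> Ar \<Longrightarrow> h \<in> Ar \<Longrightarrow> a = cd f \<Longrightarrow> b = cd g \<Longrightarrow> c = cd h \<Longrightarrow>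
  alph C a b c \<cdot> ((f \<otimes> g) \<otimes> h) = (f \<otimes> (g \<otimes> h)) \<cdot> alph C (dm f) (dm g) (dm h)"
  using al_nat by simp
lemma al_nat_id: "a \<in> Ob \<Longrightarrow> b \<in> Ob \<Longrightarrow> h \<in> Ar \<Longrightarrow> c = cd h \<Longrightarrow>
  alph C a b c \<cdot> (ii (tn a b) \<otimes> h) = (ii a \<otimes> (ii b \<otimes> h)) \<cdot> alph C a b (dm h)"
  using al_nat[of "ii a" "ii b" h] by simp
lemma lam_nat': "f \<in> Ar \<Longrightarrow> b = cd f \<Longrightarrow> lam C b \<cdot> (ii I0 \<otimes> f) = f \<cdot> lam C (dm f)"
  using lam_nat by simp
lemma rho_nat': "f \<in> Ar \<Longrightarrow> b = cd f \<Longrightarrow> rho C b \<cdot> f = (f \<otimes> ii I0) \<cdot> rho C (dm f)"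
  using rho_nat by simp

lemma sl_unique:
  assumes "X \<in> SO" "Y \<in> SO" "d1 \<in> Ar" "d2 \<in> Ar" "dm d1 = fst X" "dm d2 = fst X" "cd d1 = fst Y" "cd d2 = fst Y"
    "e' \<in> E" "cd e' = fst X" "d1 \<cdot> e' = d2 \<cdot> e'" "snd Y \<cdot> d1 = snd Y \<cdot> d2"
  shows "d1 = d2"
  by (rule diag_unique[of e' "snd Y"]) (use assms in simp_all)

lemma BX_Q[simp]: "(x,f,y) \<in> SA \<Longrightarrow> (x',f',y') \<in> SA \<Longrightarrow> BX x f y x' f' y' \<cdot> Q x x' = Q y y' \<cdot> (f \<otimes> f')"
  by (rule BX_facts)
lemma BX_ar[simp]: "(x,f,y) \<in> SA \<Longrightarrow> (x',f',y') \<in> SA \<Longrightarrow> BX x f y x' f' y' \<in> Ar"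
  by (rule BX_facts)
lemma BX_dom[simp]: "(x,f,y) \<in> SA \<Longrightarrow> (x',f',y') \<in> SA \<Longrightarrow> dm (BX x f y x' f' y') = fst (bx x x')"
  by (rule BX_facts)
lemma BX_cod[simp]: "(x,f,y) \<in> SA \<Longrightarrow> (x',f',y') \<in> SA \<Longrightarrow> cd (BX x f y x' f' y') = fst (bx y y')"
  by (rule BX_facts)
lemma BX_snd[simp]: "(x,f,y) \<in> SA \<Longrightarrow> (x',f',y') \<in> SA \<Longrightarrow> snd (bx y y') \<cdot> BX x f y x' f' y' = snd (bx x x')"
  by (rule BX_facts)
lemmas BX_Q_k[simp] = kext[OF BX_Q]
lemmas BX_snd_k[simp] = kext[OF BX_snd]

lemma LM_ar[simp]: "x \<in> SO \<Longrightarrow> LM x \<in> Ar" and LM_dom[simp]: "x \<in> SO \<Longrightarrow> dm (LM x) = fst (bx U x)"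
  and LM_cod[simp]: "x \<in> SO \<Longrightarrow> cd (LM x) = fst x" and LM_snd[simp]: "x \<in> SO \<Longrightarrow> snd x \<cdot> LM x = snd (bx U x)"
  using LM_facts by auto
lemmas LM_snd_k[simp] = kext[OF LM_snd]
lemma LM_gen[simp]: "y \<in> SO \<Longrightarrow> h \<in> Ar \<Longrightarrow> cd h = fst y \<Longrightarrow> LM y \<cdot> (Q U y \<cdot> (q0 \<otimes> h)) = lam C (fst y) \<cdot> (ii I0 \<otimes> h)"
proof -
  assume a: "y \<in> SO" "h \<in> Ar" "cd h = fst y"
  have "LM y \<cdot> (Q U y \<cdot> (q0 \<otimes> h)) = (LM y \<cdot> (Q U y \<cdot> (q0 \<otimes> ii (fst y)))) \<cdot> (ii I0 \<otimes> h)" using a by simp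
  also have "\<dots> = lam C (fst y) \<cdot> (ii I0 \<otimes> h)" using a by (simp add: LM_facts(5))
  finally show ?thesis .
qed
lemma kext2: "a \<cdot> (b \<cdot> c) = d \<Longrightarrow> a \<in> Ar \<Longrightarrow> b \<in> Ar \<Longrightarrow> c \<in> Ar \<Longrightarrow> k \<in> Ar \<Longrightarrow>
  dm a = cd b \<Longrightarrow> dm b = cd c \<Longrightarrow> dm c = cd k \<Longrightarrow> a \<cdot> (b \<cdot> (c \<cdot> k)) = d \<cdot> k"
proof -
  assume h: "a \<cdot> (b \<cdot> c) = d" and t: "a \<in> Ar" "b \<in> Ar" "c \<in> Ar" "k \<in> Ar" "dm a = cd b" "dm b = cd c" "dm c = cd k"
  have "a \<cdot> (b \<cdot> (c \<cdot> k)) = (a \<cdot> (b \<cdot> c)) \<cdot> k" using t by simp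
  then show ?thesis using h by simp
qed
lemmas LM_gen_k[simp] = kext2[OF LM_gen]

lemma RH_ar[simp]: "x \<in> SO \<Longrightarrow> RH x \<in> Ar" and RH_dom[simp]: "x \<in> SO \<Longrightarrow> dm (RH x) = fst x"
  and RH_cod[simp]: "x \<in> SO \<Longrightarrow> cd (RH x) = fst (bx x U)" and RH_snd[simp]: "x \<in> SO \<Longrightarrow> snd (bx x U) \<cdot> RH x = snd x"
  using RH_facts by auto
lemmas RH_snd_k[simp] = kext[OF RH_snd]

lemma AL_ar[simp]: "x \<in> SO \<Longrightarrow> y \<in> SO \<Longrightarrow> z \<in> SO \<Longrightarrow> AL x y z \<in> Ar"
  and AL_dom[simp]: "x \<in> SO \<Longrightarrow> y \<in> SO \<Longrightarrow> z \<in> SO \<Longrightarrow> dm (AL x y z) = fst (bx (bx x y) z)"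
  and AL_cod[simp]: "x \<in> SO \<Longrightarrow> y \<in> SO \<Longrightarrow> z \<in> SO \<Longrightarrow> cd (AL x y z) = fst (bx x (bx y z))"
  and AL_snd[simp]: "x \<in> SO \<Longrightarrow> y \<in> SO \<Longrightarrow> z \<in> SO \<Longrightarrow> snd (bx x (bx y z)) \<cdot> AL x y z = snd (bx (bx x y) z)"
  using AL_facts by auto
lemmas AL_snd_k[simp] = kext[OF AL_snd]
lemmas AL_eq = AL_facts(5)

lemma SA_I: "x \<in> SO \<Longrightarrow> y \<in> SO \<Longrightarrow> f \<in> Ar \<Longrightarrow> dm f = fst x \<Longrightarrow> cd f = fst y \<Longrightarrow> snd y \<cdot> f = snd x \<Longrightarrow> (x,f,y) \<in> SA"
  unfolding SA3 by simp

lemma BX_SA[simp]: "(x,f,y) \<in> SA \<Longrightarrow> (x',f',y') \<in> SA \<Longrightarrow> (bx x x', BX x f y x' f' y', bx y y') \<in> SA"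
proof -
  assume a: "(x,f,y) \<in> SA" "(x',f',y') \<in> SA"
  then have "x \<in> SO" "y \<in> SO" "x' \<in> SO" "y' \<in> SO" unfolding SA3 by auto
  with a show ?thesis by (intro SA_I) simp_all
qed
lemma LM_SA[simp]: "x \<in> SO \<Longrightarrow> (bx U x, LM x, x) \<in> SA" by (intro SA_I) simp_all
lemma RH_SA[simp]: "x \<in> SO \<Longrightarrow> (x, RH x, bx x U) \<in> SA" by (intro SA_I) simp_all
lemma AL_SA[simp]: "x \<in> SO \<Longrightarrow> y \<in> SO \<Longrightarrow> z \<in> SO \<Longrightarrow> (bx (bx x y) z, AL x y z, bx x (bx y z)) \<in> SA"
  by (intro SA_I) simp_all

lemma SA_D: assumes "(x,f,y) \<in> SA" shows "x \<in> SO" "y \<in> SO" "f \<in> Ar" "dm f = fst x" "cd f = fst y" "snd y \<cdot> f = snd x"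
  using assms unfolding SA3 by auto

lemma comp_SA[simp]: assumes "(x,f,y) \<in> SA" "(y,g,z) \<in> SA" shows "(x, g \<cdot> f, z) \<in> SA"
proof -
  note a = SA_D[OF assms(1)] SA_D[OF assms(2)]
  have "snd z \<cdot> (g \<cdot> f) = (snd z \<cdot> g) \<cdot> f" using a(1-5,7-11) by simp
  also have "\<dots> = snd x" using a by simp
  finally show ?thesis using a by (intro SA_I) simp_all
qed

lemma BX_id: "x \<in> SO \<Longrightarrow> y \<in> SO \<Longrightarrow> BX x (ii (fst x)) x y (ii (fst y)) y = ii (fst (bx x y))"
  by (rule sl_unique[of "bx x y" "bx x y" _ _ "Q x y"]) simp_all

lemma BX_comp:
  assumes u: "(x,f,y) \<in> SA" "(y,g,z) \<in> SA" and v: "(x',f',y') \<in> SA" "(y',g',z') \<in> SA"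
  shows "BX x (g \<cdot> f) z x' (g' \<cdot> f') z' = BX y g z y' g' z' \<cdot> BX x f y x' f' y'"
proof -
  note a = SA_D[OF u(1)] SA_D[OF u(2)] SA_D[OF v(1)] SA_D[OF v(2)]
  have c1: "(x, g \<cdot> f, z) \<in> SA" "(x', g' \<cdot> f', z') \<in> SA" using u v by simp_all
  show ?thesis
    by (rule sl_unique[of "bx x x'" "bx z z'" _ _ "Q x x'"]) (use a c1 u v in simp_all)
qed


lemma al_nat2: "f \<in> Ar \<Longrightarrow> g \<in> Ar \<Longrightarrow> h \<in> Ar \<Longrightarrow> dm f = a \<Longrightarrow> dm g = b \<Longrightarrow> dm h = c \<Longrightarrow>
  (f \<otimes> (g \<otimes> h)) \<cdot> alph C a b c = alph C (cd f) (cd g) (cd h) \<cdot> ((f \<otimes> g) \<otimes> h)"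
  using al_nat by blast
lemmas [simp] = Eclosed'

lemma LM_nat:
  assumes u: "(x,h,y) \<in> SA"
  shows "h \<cdot> LM x = LM y \<cdot> BX U (ii (fst U)) U x h y"
proof -
  note a = SA_D[OF u]
  show ?thesis
    by (rule sl_unique[of "bx U x" y _ _ "Q U x \<cdot> (q0 \<otimes> ii (fst x))"])
       (use a u in \<open>simp_all add: lam_nat' kext[OF a(6)]\<close>)
qed

lemma RH_nat:
  assumes u: "(x,h,y) \<in> SA"
  shows "BX x h y U (ii (fst U)) U \<cdot> RH x = RH y \<cdot> h"
proof -
  note a = SA_D[OF u]
  have "RH y \<cdot> h = (Q y U \<cdot> (ii (fst y) \<otimes> q0)) \<cdot> (rho C (fst y) \<cdot> h)" using a by (simp add: RH_def)
  also have "\<dots> = (Q y U \<cdot> (ii (fst y) \<otimes> q0)) \<cdot> ((h \<otimes> ii I0) \<cdot> rho C (fst x))" using a by (simp add: rho_nat')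
  also have "\<dots> = BX x h y U (ii (fst U)) U \<cdot> RH x" using a u by (simp add: RH_def)
  finally show ?thesis ..
qed

lemma AL_nat:
  assumes u: "(x,h,y) \<in> SA" and u': "(x',h',y') \<in> SA" and u'': "(x'',h'',y'') \<in> SA"
  shows "BX x h y (bx x' x'') (BX x' h' y' x'' h'' y'') (bx y' y'') \<cdot> AL x x' x''
       = AL y y' y'' \<cdot> BX (bx x x') (BX x h y x' h' y') (bx y y') x'' h'' y''"
proof -
  note a = SA_D[OF u] SA_D[OF u'] SA_D[OF u'']
  let ?e = "Q (bx x x') x'' \<cdot> (Q x x' \<otimes> ii (fst x''))"
  let ?L = "BX x h y (bx x' x'') (BX x' h' y' x'' h'' y'') (bx y' y'')"
  have "(?L \<cdot> AL x x' x'') \<cdot> ?e = ?L \<cdot> (AL x x' x'' \<cdot> (Q (bx x x') x'' \<cdot> (Q x x' \<otimes> ii (fst x''))))"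
    using a u u' u'' by simp
  also have "\<dots> = ?L \<cdot> (Q x (bx x' x'') \<cdot> ((ii (fst x) \<otimes> Q x' x'') \<cdot> alph C (fst x) (fst x') (fst x'')))"
    using a by (simp add: AL_eq)
  also have "\<dots> = Q y (bx y' y'') \<cdot> ((ii (fst y) \<otimes> Q y' y'') \<cdot> ((h \<otimes> (h' \<otimes> h'')) \<cdot> alph C (fst x) (fst x') (fst x'')))"
    using a u u' u'' by simp
  also have "\<dots> = Q y (bx y' y'') \<cdot> ((ii (fst y) \<otimes> Q y' y'') \<cdot> (alph C (fst y) (fst y') (fst y'') \<cdot> ((h \<otimes> h') \<otimes> h'')))"
    using a by (simp add: al_nat2)
  also have "\<dots> = (Q y (bx y' y'') \<cdot> ((ii (fst y) \<otimes> Q y' y'') \<cdot> alph C (fst y) (fst y') (fst y''))) \<cdot> ((h \<otimes> h') \<otimes> h'')"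
    using a by simp
  also have "\<dots> = (AL y y' y'' \<cdot> (Q (bx y y') y'' \<cdot> (Q y y' \<otimes> ii (fst y'')))) \<cdot> ((h \<otimes> h') \<otimes> h'')"
    using a by (simp add: AL_eq)
  also have "\<dots> = (AL y y' y'' \<cdot> BX (bx x x') (BX x h y x' h' y') (bx y y') x'' h'' y'') \<cdot> ?e"
    using a u u' u'' by simp
  finally have ch: "(?L \<cdot> AL x x' x'') \<cdot> ?e = (AL y y' y'' \<cdot> BX (bx x x') (BX x h y x' h' y') (bx y y') x'' h'' y'') \<cdot> ?e" .
  show ?thesis
    by (rule sl_unique[of "bx (bx x x') x''" "bx y (bx y' y'')", OF _ _ _ _ _ _ _ _ _ _ ch]) (use a u u' u'' in simp_all)
qed

lemma LM_RH: "LM U \<cdot> RH U = ii (fst U)"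
proof -
  have "(LM U \<cdot> RH U) \<cdot> q0 = (LM U \<cdot> (Q U U \<cdot> (ii (fst U) \<otimes> q0))) \<cdot> (rho C (fst U) \<cdot> q0)" by (simp add: RH_def)
  also have "\<dots> = (LM U \<cdot> (Q U U \<cdot> (ii (fst U) \<otimes> q0))) \<cdot> ((q0 \<otimes> ii I0) \<cdot> rho C I0)" by (simp add: rho_nat')
  also have "\<dots> = (lam C (fst U) \<cdot> (ii I0 \<otimes> q0)) \<cdot> rho C I0" by simp
  also have "\<dots> = (q0 \<cdot> lam C I0) \<cdot> rho C I0" by (simp add: lam_nat')
  also have "\<dots> = ii (fst U) \<cdot> q0" by (simp add: ax_lr)
  finally have ch: "(LM U \<cdot> RH U) \<cdot> q0 = ii (fst U) \<cdot> q0" .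
  show ?thesis
    by (rule sl_unique[of U U, OF _ _ _ _ _ _ _ _ _ _ ch]) simp_all
qed

end
context ctx begin

lemma RH_SA'[simp]: "x \<in> SO \<Longrightarrow> (x, Q x U \<cdot> ((ii (fst x) \<otimes> q0) \<cdot> rho C (fst x)), bx x U) \<in> SA"
  using RH_SA[of x] unfolding RH_def .

lemma TRI:
  assumes x: "x \<in> SO" and y: "y \<in> SO"
  shows "BX x (ii (fst x)) x (bx U y) (LM y) y \<cdot> (AL x U y \<cdot> BX x (RH x) (bx x U) y (ii (fst y)) y) = ii (fst (bx x y))"
proof -
  let ?B1 = "BX x (ii (fst x)) x (bx U y) (LM y) y"
  have "(?B1 \<cdot> (AL x U y \<cdot> BX x (RH x) (bx x U) y (ii (fst y)) y)) \<cdot> Q x y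
     = ?B1 \<cdot> ((AL x U y \<cdot> (Q (bx x U) y \<cdot> (Q x U \<otimes> ii (fst y)))) \<cdot> (((ii (fst x) \<otimes> q0) \<cdot> rho C (fst x)) \<otimes> ii (fst y)))"
    using x y by (simp add: RH_def)
  also have "\<dots> = ?B1 \<cdot> ((Q x (bx U y) \<cdot> ((ii (fst x) \<otimes> Q U y) \<cdot> alph C (fst x) (fst U) (fst y))) \<cdot> (((ii (fst x) \<otimes> q0) \<cdot> rho C (fst x)) \<otimes> ii (fst y)))"
    using x y by (simp add: AL_eq)
  also have "\<dots> = ?B1 \<cdot> (Q x (bx U y) \<cdot> ((ii (fst x) \<otimes> Q U y) \<cdot> ((alph C (fst x) (fst U) (fst y) \<cdot> ((ii (fst x) \<otimes> q0) \<otimes> ii (fst y))) \<cdot> (rho C (fst x) \<otimes> ii (fst y)))))"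
    using x y by simp
  also have "\<dots> = ?B1 \<cdot> (Q x (bx U y) \<cdot> ((ii (fst x) \<otimes> Q U y) \<cdot> (((ii (fst x) \<otimes> (q0 \<otimes> ii (fst y))) \<cdot> alph C (fst x) I0 (fst y)) \<cdot> (rho C (fst x) \<otimes> ii (fst y)))))"
    using x y by (simp add: al_nat')
  also have "\<dots> = Q x y \<cdot> ((ii (fst x) \<otimes> lam C (fst y)) \<cdot> (alph C (fst x) I0 (fst y) \<cdot> (rho C (fst x) \<otimes> ii (fst y))))"
    using x y by simp
  also have "\<dots> = ii (fst (bx x y)) \<cdot> Q x y" using x y by (simp add: ax_tri)
  finally have ch: "(?B1 \<cdot> (AL x U y \<cdot> BX x (RH x) (bx x U) y (ii (fst y)) y)) \<cdot> Q x y = ii (fst (bx x y)) \<cdot> Q x y" .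
  show ?thesis
    by (rule sl_unique[of "bx x y" "bx x y", OF _ _ _ _ _ _ _ _ _ _ ch]) (use x y in simp_all)
qed

lemma LA:
  assumes x: "x \<in> SO" and y: "y \<in> SO"
  shows "LM (bx x y) \<cdot> AL U x y = BX (bx U x) (LM x) x y (ii (fst y)) y"
proof -
  let ?e = "Q (bx U x) y \<cdot> ((Q U x \<cdot> (q0 \<otimes> ii (fst x))) \<otimes> ii (fst y))"
  have "(LM (bx x y) \<cdot> AL U x y) \<cdot> ?e
      = LM (bx x y) \<cdot> ((AL U x y \<cdot> (Q (bx U x) y \<cdot> (Q U x \<otimes> ii (fst y)))) \<cdot> ((q0 \<otimes> ii (fst x)) \<otimes> ii (fst y)))"
    using x y by simp
  also have "\<dots> = LM (bx x y) \<cdot> ((Q U (bx x y) \<cdot> ((ii (fst U) \<otimes> Q x y) \<cdot> alph C (fst U) (fst x) (fst y))) \<cdot> ((q0 \<otimes> ii (fst x)) \<otimes> ii (fst y)))"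
    using x y by (simp add: AL_eq)
  also have "\<dots> = LM (bx x y) \<cdot> (Q U (bx x y) \<cdot> ((ii (fst U) \<otimes> Q x y) \<cdot> (alph C (fst U) (fst x) (fst y) \<cdot> ((q0 \<otimes> ii (fst x)) \<otimes> ii (fst y)))))"
    using x y by simp
  also have "\<dots> = LM (bx x y) \<cdot> (Q U (bx x y) \<cdot> ((ii (fst U) \<otimes> Q x y) \<cdot> ((q0 \<otimes> (ii (fst x) \<otimes> ii (fst y))) \<cdot> alph C I0 (fst x) (fst y))))"
    using x y by (simp add: al_nat')
  also have "\<dots> = (lam C (fst (bx x y)) \<cdot> (ii I0 \<otimes> Q x y)) \<cdot> alph C I0 (fst x) (fst y)"
    using x y by simp
  also have "\<dots> = (Q x y \<cdot> lam C (tn (fst x) (fst y))) \<cdot> alph C I0 (fst x) (fst y)"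
    using x y by (simp add: lam_nat')
  also have "\<dots> = Q x y \<cdot> (lam C (fst x) \<otimes> ii (fst y))"
    using x y by (simp add: ax_la)
  also have "\<dots> = BX (bx U x) (LM x) x y (ii (fst y)) y \<cdot> ?e"
    using x y by simp
  finally have ch: "(LM (bx x y) \<cdot> AL U x y) \<cdot> ?e = BX (bx U x) (LM x) x y (ii (fst y)) y \<cdot> ?e" .
  show ?thesis
    by (rule sl_unique[of "bx (bx U x) y" "bx x y", OF _ _ _ _ _ _ _ _ _ _ ch]) (use x y in simp_all)
qed

lemma AR:
  assumes x: "x \<in> SO" and y: "y \<in> SO"
  shows "AL x y U \<cdot> RH (bx x y) = BX x (ii (fst x)) x y (RH y) (bx y U)"
proof -
  have "(AL x y U \<cdot> RH (bx x y)) \<cdot> Q x y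
     = AL x y U \<cdot> (Q (bx x y) U \<cdot> ((ii (fst (bx x y)) \<otimes> q0) \<cdot> (rho C (fst (bx x y)) \<cdot> Q x y)))"
    using x y by (simp add: RH_def)
  also have "\<dots> = AL x y U \<cdot> (Q (bx x y) U \<cdot> ((ii (fst (bx x y)) \<otimes> q0) \<cdot> ((Q x y \<otimes> ii I0) \<cdot> rho C (tn (fst x) (fst y)))))"
    using x y by (simp add: rho_nat')
  also have "\<dots> = (AL x y U \<cdot> (Q (bx x y) U \<cdot> (Q x y \<otimes> ii (fst U)))) \<cdot> ((ii (tn (fst x) (fst y)) \<otimes> q0) \<cdot> rho C (tn (fst x) (fst y)))"
    using x y by simp
  also have "\<dots> = (Q x (bx y U) \<cdot> ((ii (fst x) \<otimes> Q y U) \<cdot> alph C (fst x) (fst y) (fst U))) \<cdot> ((ii (tn (fst x) (fst y)) \<otimes> q0) \<cdot> rho C (tn (fst x) (fst y)))"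
    using x y by (simp add: AL_eq)
  also have "\<dots> = Q x (bx y U) \<cdot> ((ii (fst x) \<otimes> Q y U) \<cdot> ((alph C (fst x) (fst y) (fst U) \<cdot> (ii (tn (fst x) (fst y)) \<otimes> q0)) \<cdot> rho C (tn (fst x) (fst y))))"
    using x y by simp
  also have "\<dots> = Q x (bx y U) \<cdot> ((ii (fst x) \<otimes> Q y U) \<cdot> (((ii (fst x) \<otimes> (ii (fst y) \<otimes> q0)) \<cdot> alph C (fst x) (fst y) I0) \<cdot> rho C (tn (fst x) (fst y))))"
    using x y by (simp add: al_nat_id)
  also have "\<dots> = Q x (bx y U) \<cdot> ((ii (fst x) \<otimes> Q y U) \<cdot> ((ii (fst x) \<otimes> (ii (fst y) \<otimes> q0)) \<cdot> (alph C (fst x) (fst y) I0 \<cdot> rho C (tn (fst x) (fst y)))))"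
    using x y by simp
  also have "\<dots> = Q x (bx y U) \<cdot> ((ii (fst x) \<otimes> Q y U) \<cdot> ((ii (fst x) \<otimes> (ii (fst y) \<otimes> q0)) \<cdot> (ii (fst x) \<otimes> rho C (fst y))))"
    using x y by (simp add: ax_ar)
  also have "\<dots> = BX x (ii (fst x)) x y (RH y) (bx y U) \<cdot> Q x y"
    using x y by (simp add: RH_def)
  finally have ch: "(AL x y U \<cdot> RH (bx x y)) \<cdot> Q x y = BX x (ii (fst x)) x y (RH y) (bx y U) \<cdot> Q x y" .
  show ?thesis
    by (rule sl_unique[of "bx x y" "bx x (bx y U)", OF _ _ _ _ _ _ _ _ _ _ ch]) (use x y in simp_all)
qed


lemma PENT:
  assumes x: "x \<in> SO" and y: "y \<in> SO" and z: "z \<in> SO" and w: "w \<in> SO"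
  shows "BX x (ii (fst x)) x (bx (bx y z) w) (AL y z w) (bx y (bx z w)) \<cdot>
           (AL x (bx y z) w \<cdot> BX (bx (bx x y) z) (AL x y z) (bx x (bx y z)) w (ii (fst w)) w)
         = AL x y (bx z w) \<cdot> AL (bx x y) z w"
proof -
  let ?e = "Q (bx (bx x y) z) w \<cdot> ((Q (bx x y) z \<cdot> (Q x y \<otimes> ii (fst z))) \<otimes> ii (fst w))"
  let ?BA = "BX x (ii (fst x)) x (bx (bx y z) w) (AL y z w) (bx y (bx z w))"
  let ?BB = "BX (bx (bx x y) z) (AL x y z) (bx x (bx y z)) w (ii (fst w)) w"
  note o = x y z w
  have "(?BA \<cdot> (AL x (bx y z) w \<cdot> ?BB)) \<cdot> ?e
     = ?BA \<cdot> (AL x (bx y z) w \<cdot> (Q (bx x (bx y z)) w \<cdot> ((AL x y z \<cdot> (Q (bx x y) z \<cdot> (Q x y \<otimes> ii (fst z)))) \<otimes> ii (fst w))))"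
    using o by simp
  also have "\<dots> = ?BA \<cdot> (AL x (bx y z) w \<cdot> (Q (bx x (bx y z)) w \<cdot> ((Q x (bx y z) \<cdot> ((ii (fst x) \<otimes> Q y z) \<cdot> alph C (fst x) (fst y) (fst z))) \<otimes> ii (fst w))))"
    using o by (simp add: AL_eq)
  also have "\<dots> = ?BA \<cdot> ((AL x (bx y z) w \<cdot> (Q (bx x (bx y z)) w \<cdot> (Q x (bx y z) \<otimes> ii (fst w)))) \<cdot> (((ii (fst x) \<otimes> Q y z) \<cdot> alph C (fst x) (fst y) (fst z)) \<otimes> ii (fst w)))"
    using o by simp
  also have "\<dots> = ?BA \<cdot> ((Q x (bx (bx y z) w) \<cdot> ((ii (fst x) \<otimes> Q (bx y z) w) \<cdot> alph C (fst x) (fst (bx y z)) (fst w))) \<cdot> (((ii (fst x) \<otimes> Q y z) \<cdot> alph C (fst x) (fst y) (fst z)) \<otimes> ii (fst w)))"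
    using o by (simp add: AL_eq)
  also have "\<dots> = ?BA \<cdot> (Q x (bx (bx y z) w) \<cdot> ((ii (fst x) \<otimes> Q (bx y z) w) \<cdot> ((alph C (fst x) (fst (bx y z)) (fst w) \<cdot> ((ii (fst x) \<otimes> Q y z) \<otimes> ii (fst w))) \<cdot> (alph C (fst x) (fst y) (fst z) \<otimes> ii (fst w)))))"
    using o by simp
  also have "\<dots> = ?BA \<cdot> (Q x (bx (bx y z) w) \<cdot> ((ii (fst x) \<otimes> Q (bx y z) w) \<cdot> (((ii (fst x) \<otimes> (Q y z \<otimes> ii (fst w))) \<cdot> alph C (fst x) (tn (fst y) (fst z)) (fst w)) \<cdot> (alph C (fst x) (fst y) (fst z) \<otimes> ii (fst w)))))"
    using o by (simp add: al_nat')
  also have "\<dots> = Q x (bx y (bx z w)) \<cdot> ((ii (fst x) \<otimes> (AL y z w \<cdot> (Q (bx y z) w \<cdot> (Q y z \<otimes> ii (fst w))))) \<cdot> (alph C (fst x) (tn (fst y) (fst z)) (fst w) \<cdot> (alph C (fst x) (fst y) (fst z) \<otimes> ii (fst w))))"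
    using o by simp
  also have "\<dots> = Q x (bx y (bx z w)) \<cdot> ((ii (fst x) \<otimes> (Q y (bx z w) \<cdot> ((ii (fst y) \<otimes> Q z w) \<cdot> alph C (fst y) (fst z) (fst w)))) \<cdot> (alph C (fst x) (tn (fst y) (fst z)) (fst w) \<cdot> (alph C (fst x) (fst y) (fst z) \<otimes> ii (fst w))))"
    using o by (simp add: AL_eq)
  also have "\<dots> = (Q x (bx y (bx z w)) \<cdot> (ii (fst x) \<otimes> (Q y (bx z w) \<cdot> (ii (fst y) \<otimes> Q z w)))) \<cdot> ((ii (fst x) \<otimes> alph C (fst y) (fst z) (fst w)) \<cdot> (alph C (fst x) (tn (fst y) (fst z)) (fst w) \<cdot> (alph C (fst x) (fst y) (fst z) \<otimes> ii (fst w))))"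
    using o by simp
  also have "\<dots> = (Q x (bx y (bx z w)) \<cdot> (ii (fst x) \<otimes> (Q y (bx z w) \<cdot> (ii (fst y) \<otimes> Q z w)))) \<cdot> (alph C (fst x) (fst y) (tn (fst z) (fst w)) \<cdot> alph C (tn (fst x) (fst y)) (fst z) (fst w))"
    using o by (simp add: ax_pent)
  finally have L: "(?BA \<cdot> (AL x (bx y z) w \<cdot> ?BB)) \<cdot> ?e = (Q x (bx y (bx z w)) \<cdot> (ii (fst x) \<otimes> (Q y (bx z w) \<cdot> (ii (fst y) \<otimes> Q z w)))) \<cdot> (alph C (fst x) (fst y) (tn (fst z) (fst w)) \<cdot> alph C (tn (fst x) (fst y)) (fst z) (fst w))" .
  have "(AL x y (bx z w) \<cdot> AL (bx x y) z w) \<cdot> ?e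
      = AL x y (bx z w) \<cdot> ((AL (bx x y) z w \<cdot> (Q (bx (bx x y) z) w \<cdot> (Q (bx x y) z \<otimes> ii (fst w)))) \<cdot> ((Q x y \<otimes> ii (fst z)) \<otimes> ii (fst w)))"
    using o by simp
  also have "\<dots> = AL x y (bx z w) \<cdot> ((Q (bx x y) (bx z w) \<cdot> ((ii (fst (bx x y)) \<otimes> Q z w) \<cdot> alph C (fst (bx x y)) (fst z) (fst w))) \<cdot> ((Q x y \<otimes> ii (fst z)) \<otimes> ii (fst w)))"
    using o by (simp add: AL_eq)
  also have "\<dots> = AL x y (bx z w) \<cdot> (Q (bx x y) (bx z w) \<cdot> ((ii (fst (bx x y)) \<otimes> Q z w) \<cdot> (alph C (fst (bx x y)) (fst z) (fst w) \<cdot> ((Q x y \<otimes> ii (fst z)) \<otimes> ii (fst w)))))"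
    using o by simp
  also have "\<dots> = AL x y (bx z w) \<cdot> (Q (bx x y) (bx z w) \<cdot> ((ii (fst (bx x y)) \<otimes> Q z w) \<cdot> ((Q x y \<otimes> (ii (fst z) \<otimes> ii (fst w))) \<cdot> alph C (tn (fst x) (fst y)) (fst z) (fst w))))"
    using o by (simp add: al_nat')
  also have "\<dots> = (AL x y (bx z w) \<cdot> (Q (bx x y) (bx z w) \<cdot> (Q x y \<otimes> ii (fst (bx z w))))) \<cdot> ((ii (tn (fst x) (fst y)) \<otimes> Q z w) \<cdot> alph C (tn (fst x) (fst y)) (fst z) (fst w))"
    using o by simp
  also have "\<dots> = (Q x (bx y (bx z w)) \<cdot> ((ii (fst x) \<otimes> Q y (bx z w)) \<cdot> alph C (fst x) (fst y) (fst (bx z w)))) \<cdot> ((ii (tn (fst x) (fst y)) \<otimes> Q z w) \<cdot> alph C (tn (fst x) (fst y)) (fst z) (fst w))"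
    using o by (simp add: AL_eq)
  also have "\<dots> = Q x (bx y (bx z w)) \<cdot> ((ii (fst x) \<otimes> Q y (bx z w)) \<cdot> ((alph C (fst x) (fst y) (fst (bx z w)) \<cdot> (ii (tn (fst x) (fst y)) \<otimes> Q z w)) \<cdot> alph C (tn (fst x) (fst y)) (fst z) (fst w)))"
    using o by simp
  also have "\<dots> = Q x (bx y (bx z w)) \<cdot> ((ii (fst x) \<otimes> Q y (bx z w)) \<cdot> (((ii (fst x) \<otimes> (ii (fst y) \<otimes> Q z w)) \<cdot> alph C (fst x) (fst y) (tn (fst z) (fst w))) \<cdot> alph C (tn (fst x) (fst y)) (fst z) (fst w)))"
    using o by (simp add: al_nat_id)
  also have "\<dots> = (Q x (bx y (bx z w)) \<cdot> (ii (fst x) \<otimes> (Q y (bx z w) \<cdot> (ii (fst y) \<otimes> Q z w)))) \<cdot> (alph C (fst x) (fst y) (tn (fst z) (fst w)) \<cdot> alph C (tn (fst x) (fst y)) (fst z) (fst w))"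
    using o by simp
  finally have R: "(AL x y (bx z w) \<cdot> AL (bx x y) z w) \<cdot> ?e = (Q x (bx y (bx z w)) \<cdot> (ii (fst x) \<otimes> (Q y (bx z w) \<cdot> (ii (fst y) \<otimes> Q z w)))) \<cdot> (alph C (fst x) (fst y) (tn (fst z) (fst w)) \<cdot> alph C (tn (fst x) (fst y)) (fst z) (fst w))" .
  have ch: "(?BA \<cdot> (AL x (bx y z) w \<cdot> ?BB)) \<cdot> ?e = (AL x y (bx z w) \<cdot> AL (bx x y) z w) \<cdot> ?e"
    using L R by simp
  show ?thesis
    by (rule sl_unique[of "bx (bx (bx x y) z) w" "bx x (bx y (bx z w))", OF _ _ _ _ _ _ _ _ _ _ ch]) (use o in simp_all)
qed

end
context ctx begin

abbreviation "SK \<equiv> slice_skew C E M T e m"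

lemma SK_simps[simp]: "cobj SK = SO" "carr SK = SA" "cdom SK = (\<lambda>u. fst u)" "ccod SK = (\<lambda>u. snd (snd u))"
  "cid SK = (\<lambda>x. (x, ii (fst x), x))" "ccomp SK = (\<lambda>v u. (fst u, fst (snd v) \<cdot> fst (snd u), snd (snd v)))"
  "tunit SK = U" "tens SK = bx" "tensm SK = sl_tensm C E M m" "lam SK = sl_lam C E M e m"
  "rho SK = sl_rho C E M e m" "alph SK = sl_alph C E M m"
  unfolding slice_skew_def by simp_all

lemma SA_cases: "f \<in> SA \<Longrightarrow> (\<And>x h y. f = (x,h,y) \<Longrightarrow> (x,h,y) \<in> SA \<Longrightarrow> P) \<Longrightarrow> P"
  by (cases f) auto

lemma hom_SK: "f \<in> hom SK a b \<longleftrightarrow> f \<in> SA \<and> fst f = a \<and> snd (snd f) = b"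
  unfolding hom_def by simp

lemmas [simp] = BX_facts(1) LM_facts(1) RH_facts(1) AL_facts(1)

lemma SK_cat: "is_category SK"
proof -
  have 1: "\<forall>f\<in>carr SK. cdom SK f \<in> cobj SK \<and> ccod SK f \<in> cobj SK"
    unfolding SK_simps by (intro ballI) (simp add: SA_iff)
  have 2: "\<forall>a\<in>cobj SK. cid SK a \<in> hom SK a a"
    unfolding SK_simps hom_SK by simp
  have 3: "\<forall>f\<in>carr SK. \<forall>g\<in>carr SK. cdom SK g = ccod SK f \<longrightarrow>
        ccomp SK g f \<in> hom SK (cdom SK f) (ccod SK g)"
    unfolding SK_simps hom_SK
  proof (intro ballI impI)
    fix f g assume f: "f \<in> SA" and g: "g \<in> SA" and fg: "fst g = snd (snd f)"
    obtain x h y where fe: "f = (x,h,y)" by (cases f) auto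
    obtain y' k z where ge: "g = (y',k,z)" by (cases g) auto
    have "(x,h,y) \<in> SA" "(y,k,z) \<in> SA" using f g fg unfolding fe ge by simp_all
    then show "(fst f, fst (snd g) \<cdot> fst (snd f), snd (snd g)) \<in> SA \<and>
       fst (fst f, fst (snd g) \<cdot> fst (snd f), snd (snd g)) = fst f \<and>
       snd (snd (fst f, fst (snd g) \<cdot> fst (snd f), snd (snd g))) = snd (snd g)"
      using fg unfolding fe ge by simp
  qed
  have 4: "\<forall>f\<in>carr SK. ccomp SK f (cid SK (cdom SK f)) = f \<and> ccomp SK (cid SK (ccod SK f)) f = f"
    unfolding SK_simps
  proof (intro ballI)
    fix f assume f: "f \<in> SA"
    obtain x h y where fe: "f = (x,h,y)" by (cases f) auto
    note a = SA_D[OF f[unfolded fe]]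
    show "(fst (fst f, ii (fst (fst f)), fst f), fst (snd f) \<cdot> fst (snd (fst f, ii (fst (fst f)), fst f)), snd (snd f)) = f \<and>
        (fst f, fst (snd (snd (snd f), ii (fst (snd (snd f))), snd (snd f))) \<cdot> fst (snd f), snd (snd (snd (snd f), ii (fst (snd (snd f))), snd (snd f)))) = f"
      unfolding fe using a by simp
  qed
  have 5: "\<forall>f\<in>carr SK. \<forall>g\<in>carr SK. \<forall>h\<in>carr SK. cdom SK g = ccod SK f \<longrightarrow> cdom SK h = ccod SK g \<longrightarrow>
        ccomp SK h (ccomp SK g f) = ccomp SK (ccomp SK h g) f"
    unfolding SK_simps
  proof (intro ballI impI)
    fix f g h assume f: "f \<in> SA" and g: "g \<in> SA" and h: "h \<in> SA" and fg: "fst g = snd (snd f)" and gh: "fst h = snd (snd g)"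
    obtain x1 a1 y1 where fe: "f = (x1,a1,y1)" by (cases f) auto
    obtain x2 a2 y2 where ge: "g = (x2,a2,y2)" by (cases g) auto
    obtain x3 a3 y3 where he: "h = (x3,a3,y3)" by (cases h) auto
    note a = SA_D[OF f[unfolded fe]] SA_D[OF g[unfolded ge]] SA_D[OF h[unfolded he]]
    have e: "x2 = y1" "x3 = y2" using fg gh unfolding fe ge he by simp_all
    show "(fst (fst f, fst (snd g) \<cdot> fst (snd f), snd (snd g)), fst (snd h) \<cdot> fst (snd (fst f, fst (snd g) \<cdot> fst (snd f), snd (snd g))), snd (snd h)) =
       (fst f, fst (snd (fst g, fst (snd h) \<cdot> fst (snd g), snd (snd h))) \<cdot> fst (snd f), snd (snd (fst g, fst (snd h) \<cdot> fst (snd g), snd (snd h))))"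
      unfolding fe ge he using a(1-5) a(7-11) a(13-17) e by simp
  qed
  show ?thesis unfolding is_category_def using 1 2 3 4 5 by (intro conjI)
qed


lemma SK_skew: "is_skew SK"
proof -
  have 2: "tunit SK \<in> cobj SK" by simp
  have 3: "\<forall>x\<in>cobj SK. \<forall>y\<in>cobj SK. tens SK x y \<in> cobj SK" by simp
  have 4: "\<forall>f\<in>carr SK. \<forall>g\<in>carr SK. tensm SK f g \<in> hom SK (tens SK (cdom SK f) (cdom SK g)) (tens SK (ccod SK f) (ccod SK g))"
    unfolding SK_simps hom_SK
  proof (intro ballI)
    fix f g assume f: "f \<in> SA" and g: "g \<in> SA"
    obtain x a y where fe: "f = (x,a,y)" by (cases f) auto
    obtain x' b y' where ge: "g = (x',b,y')" by (cases g) auto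
    show "sl_tensm C E M m f g \<in> SA \<and> fst (sl_tensm C E M m f g) = bx (fst f) (fst g) \<and>
          snd (snd (sl_tensm C E M m f g)) = bx (snd (snd f)) (snd (snd g))"
      using f g unfolding fe ge by simp
  qed
  have 5: "\<forall>x\<in>cobj SK. \<forall>y\<in>cobj SK. tensm SK (cid SK x) (cid SK y) = cid SK (tens SK x y)"
    by (simp add: BX_id)
  have 6: "\<forall>f\<in>carr SK. \<forall>g\<in>carr SK. \<forall>f'\<in>carr SK. \<forall>g'\<in>carr SK. cdom SK g = ccod SK f \<longrightarrow> cdom SK g' = ccod SK f' \<longrightarrow>
        tensm SK (ccomp SK g f) (ccomp SK g' f') = ccomp SK (tensm SK g g') (tensm SK f f')"
    unfolding SK_simps
  proof (intro ballI impI)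
    fix f g f' g' assume f: "f \<in> SA" and g: "g \<in> SA" and f': "f' \<in> SA" and g': "g' \<in> SA"
      and fg: "fst g = snd (snd f)" and fg': "fst g' = snd (snd f')"
    obtain x a y where fe: "f = (x,a,y)" by (cases f) auto
    obtain y2 b z where ge: "g = (y2,b,z)" by (cases g) auto
    obtain x' a' y' where fe': "f' = (x',a',y')" by (cases f') auto
    obtain y2' b' z' where ge': "g' = (y2',b',z')" by (cases g') auto
    have u: "(x,a,y) \<in> SA" "(y,b,z) \<in> SA" "(x',a',y') \<in> SA" "(y',b',z') \<in> SA"
      using f g f' g' fg fg' unfolding fe ge fe' ge' by simp_all
    show "sl_tensm C E M m (fst f, fst (snd g) \<cdot> fst (snd f), snd (snd g)) (fst f', fst (snd g') \<cdot> fst (snd f'), snd (snd g')) =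
       (fst (sl_tensm C E M m f f'), fst (snd (sl_tensm C E M m g g')) \<cdot> fst (snd (sl_tensm C E M m f f')), snd (snd (sl_tensm C E M m g g')))"
      using u fg fg' unfolding fe ge fe' ge' by (simp add: BX_comp)
  qed
  have 7: "\<forall>x\<in>cobj SK. lam SK x \<in> hom SK (tens SK (tunit SK) x) x \<and> rho SK x \<in> hom SK x (tens SK x (tunit SK))"
    unfolding hom_SK by simp
  have 8: "\<forall>x\<in>cobj SK. \<forall>y\<in>cobj SK. \<forall>z\<in>cobj SK. alph SK x y z \<in> hom SK (tens SK (tens SK x y) z) (tens SK x (tens SK y z))"
    unfolding hom_SK by simp
  have 9: "\<forall>f\<in>carr SK. ccomp SK f (lam SK (cdom SK f)) = ccomp SK (lam SK (ccod SK f)) (tensm SK (cid SK (tunit SK)) f)"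
    unfolding SK_simps
  proof (intro ballI)
    fix f assume f: "f \<in> SA"
    obtain x a y where fe: "f = (x,a,y)" by (cases f) auto
    have u: "(x,a,y) \<in> SA" using f unfolding fe .
    note s = SA_D[OF u]
    show "(fst (sl_lam C E M e m (fst f)), fst (snd f) \<cdot> fst (snd (sl_lam C E M e m (fst f))), snd (snd f)) =
       (fst (sl_tensm C E M m (U, ii (fst U), U) f), fst (snd (sl_lam C E M e m (snd (snd f)))) \<cdot> fst (snd (sl_tensm C E M m (U, ii (fst U), U) f)),
        snd (snd (sl_lam C E M e m (snd (snd f)))))"
      unfolding fe using u s(1,2) by (simp add: LM_nat[OF u])
  qed
  have 10: "\<forall>f\<in>carr SK. ccomp SK (tensm SK f (cid SK (tunit SK))) (rho SK (cdom SK f)) = ccomp SK (rho SK (ccod SK f)) f"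
    unfolding SK_simps
  proof (intro ballI)
    fix f assume f: "f \<in> SA"
    obtain x a y where fe: "f = (x,a,y)" by (cases f) auto
    have u: "(x,a,y) \<in> SA" using f unfolding fe .
    note s = SA_D[OF u]
    show "(fst (sl_rho C E M e m (fst f)), fst (snd (sl_tensm C E M m f (U, ii (fst U), U))) \<cdot> fst (snd (sl_rho C E M e m (fst f))),
        snd (snd (sl_tensm C E M m f (U, ii (fst U), U)))) =
       (fst f, fst (snd (sl_rho C E M e m (snd (snd f)))) \<cdot> fst (snd f), snd (snd (sl_rho C E M e m (snd (snd f)))))"
      unfolding fe using u s(1,2) by (simp add: RH_nat[OF u])
  qed
  have 11: "\<forall>f\<in>carr SK. \<forall>g\<in>carr SK. \<forall>h\<in>carr SK. ccomp SK (tensm SK f (tensm SK g h)) (alph SK (cdom SK f) (cdom SK g) (cdom SK h))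
       = ccomp SK (alph SK (ccod SK f) (ccod SK g) (ccod SK h)) (tensm SK (tensm SK f g) h)"
    unfolding SK_simps
  proof (intro ballI)
    fix f g h assume f: "f \<in> SA" and g: "g \<in> SA" and h: "h \<in> SA"
    obtain x a y where fe: "f = (x,a,y)" by (cases f) auto
    obtain x' a' y' where ge: "g = (x',a',y')" by (cases g) auto
    obtain x'' a'' y'' where he: "h = (x'',a'',y'')" by (cases h) auto
    have u: "(x,a,y) \<in> SA" "(x',a',y') \<in> SA" "(x'',a'',y'') \<in> SA" using f g h unfolding fe ge he by simp_all
    note s = SA_D[OF u(1)] SA_D[OF u(2)] SA_D[OF u(3)]
    show "(fst (sl_alph C E M m (fst f) (fst g) (fst h)),
        fst (snd (sl_tensm C E M m f (sl_tensm C E M m g h))) \<cdot> fst (snd (sl_alph C E M m (fst f) (fst g) (fst h))),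
        snd (snd (sl_tensm C E M m f (sl_tensm C E M m g h)))) =
       (fst (sl_tensm C E M m (sl_tensm C E M m f g) h),
        fst (snd (sl_alph C E M m (snd (snd f)) (snd (snd g)) (snd (snd h)))) \<cdot> fst (snd (sl_tensm C E M m (sl_tensm C E M m f g) h)),
        snd (snd (sl_alph C E M m (snd (snd f)) (snd (snd g)) (snd (snd h)))))"
      unfolding fe ge he using u s(1,2,7,8,13,14) by (simp add: AL_nat[OF u])
  qed
  have 12: "ccomp SK (lam SK (tunit SK)) (rho SK (tunit SK)) = cid SK (tunit SK)"
    by (simp add: LM_RH)
  have 13: "\<forall>x\<in>cobj SK. \<forall>y\<in>cobj SK. ccomp SK (tensm SK (cid SK x) (lam SK y)) (ccomp SK (alph SK x (tunit SK) y) (tensm SK (rho SK x) (cid SK y))) = cid SK (tens SK x y)"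
    by (simp add: TRI)
  have 14: "\<forall>x\<in>cobj SK. \<forall>y\<in>cobj SK. ccomp SK (lam SK (tens SK x y)) (alph SK (tunit SK) x y) = tensm SK (lam SK x) (cid SK y)"
    by (simp add: LA)
  have 15: "\<forall>x\<in>cobj SK. \<forall>y\<in>cobj SK. ccomp SK (alph SK x y (tunit SK)) (rho SK (tens SK x y)) = tensm SK (cid SK x) (rho SK y)"
    by (simp add: AR)
  have 16: "\<forall>x\<in>cobj SK. \<forall>y\<in>cobj SK. \<forall>z\<in>cobj SK. \<forall>w\<in>cobj SK.
        ccomp SK (tensm SK (cid SK x) (alph SK y z w)) (ccomp SK (alph SK x (tens SK y z) w) (tensm SK (alph SK x y z) (cid SK w)))
        = ccomp SK (alph SK x y (tens SK z w)) (alph SK (tens SK x y) z w)"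
    by (simp add: PENT)
  show ?thesis unfolding is_skew_def Let_def
    using SK_cat 2 3 4 5 6 7 8 9 10 11 12 13 14 15 16 by (intro conjI)
qed

end
context ctx begin

abbreviation "SF \<equiv> slice_fun C E M e m"

lemma SF_simps[simp]: "fo SF = fst" "fm SF = (\<lambda>u. fst (snd u))" "lu SF = q0" "lm SF = Q"
  unfolding slice_fun_def by simp_all

lemma SF_lax: "is_lax SK C SF"
proof -
  have f: "is_functor SK C (fo SF) (fm SF)"
    unfolding is_functor_def SK_simps SF_simps
  proof (intro conjI ballI impI)
    fix x assume "x \<in> SO" then show "fst x \<in> Ob" by simp
  next
    fix f assume "f \<in> SA" then show "fst (snd f) \<in> hom C (fst (fst f)) (fst (snd (snd f)))"
      unfolding SA_iff hom_def by simp
  next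
    fix x assume "x \<in> SO" then show "fst (snd (x, ii (fst x), x)) = ii (fst x)" by simp
  next
    fix f g assume "f \<in> SA" "g \<in> SA" "fst g = snd (snd f)"
    then show "fst (snd (fst f, fst (snd g) \<cdot> fst (snd f), snd (snd g))) = fst (snd g) \<cdot> fst (snd f)" by simp
  qed
  have nat: "\<forall>f\<in>SA. \<forall>g\<in>SA. fst (snd (sl_tensm C E M m f g)) \<cdot> Q (fst f) (fst g) = Q (snd (snd f)) (snd (snd g)) \<cdot> (fst (snd f) \<otimes> fst (snd g))"
  proof (intro ballI)
    fix f g assume f: "f \<in> SA" and g: "g \<in> SA"
    obtain x a y where fe: "f = (x,a,y)" by (cases f) auto
    obtain x' b y' where ge: "g = (x',b,y')" by (cases g) auto
    show "fst (snd (sl_tensm C E M m f g)) \<cdot> Q (fst f) (fst g) = Q (snd (snd f)) (snd (snd g)) \<cdot> (fst (snd f) \<otimes> fst (snd g))"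
      using f g unfolding fe ge by simp
  qed
  have lu: "\<forall>x\<in>SO. LM x \<cdot> (Q U x \<cdot> (q0 \<otimes> ii (fst x))) = lam C (fst x)" by simp
  have al: "\<forall>x\<in>SO. \<forall>y\<in>SO. \<forall>z\<in>SO. AL x y z \<cdot> (Q (bx x y) z \<cdot> (Q x y \<otimes> ii (fst z)))
        = Q x (bx y z) \<cdot> ((ii (fst x) \<otimes> Q y z) \<cdot> alph C (fst x) (fst y) (fst z))"
    by (simp add: AL_eq)
  show ?thesis unfolding is_lax_def Let_def
    using f nat lu al by (simp add: hom_def RH_def)
qed

lemma SK_grading: "is_grading C T e m M SK SF slice_tau"
  unfolding is_grading_def
  using SK_skew SF_lax by (simp add: slice_tau_def hom_def SA_iff)

end

locale grd = ctx C T e m E M for C :: "('o,'m,'z) skewcat_scheme" and T e m E M +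
  fixes Gr :: "('go,'gm,'z2) skewcat_scheme" and G :: "('go,'gm,'o,'m) laxf" and g :: "'go \<Rightarrow> 'm"
  assumes grading: "is_grading C T e m M Gr G g"
begin

abbreviation "GO \<equiv> cobj Gr"
abbreviation "GA \<equiv> carr Gr"
abbreviation "gdm \<equiv> cdom Gr"
abbreviation "gcod \<equiv> ccod Gr"
abbreviation "gt \<equiv> tens Gr"
abbreviation "gI \<equiv> tunit Gr"
abbreviation "Gm \<equiv> tensm Gr"
abbreviation "Go \<equiv> fo G"
abbreviation "Gf \<equiv> fm G"
abbreviation "Gu \<equiv> lu G"
abbreviation "Gmu \<equiv> lm G"

lemmas grd_u = grading[unfolded is_grading_def]
lemma Gr_skew: "is_skew Gr" using grd_u by blast
lemma G_lax: "is_lax Gr C G" using grd_u by blast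
lemmas gs0 = Gr_skew[unfolded is_skew_def Let_def, THEN conjunct1]
lemmas gs1 = Gr_skew[unfolded is_skew_def Let_def, THEN conjunct2, THEN conjunct1]
lemmas gs2 = Gr_skew[unfolded is_skew_def Let_def, THEN conjunct2, THEN conjunct2, THEN conjunct1]
lemmas gs3 = Gr_skew[unfolded is_skew_def Let_def, THEN conjunct2, THEN conjunct2, THEN conjunct2, THEN conjunct1]
lemmas gs4 = Gr_skew[unfolded is_skew_def Let_def, THEN conjunct2, THEN conjunct2, THEN conjunct2, THEN conjunct2, THEN conjunct1]
lemmas gs5 = Gr_skew[unfolded is_skew_def Let_def, THEN conjunct2, THEN conjunct2, THEN conjunct2, THEN conjunct2, THEN conjunct2, THEN conjunct1]
lemmas gs6 = Gr_skew[unfolded is_skew_def Let_def, THEN conjunct2, THEN conjunct2, THEN conjunct2, THEN conjunct2, THEN conjunct2, THEN conjunct2, THEN conjunct1]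
lemmas gs7 = Gr_skew[unfolded is_skew_def Let_def, THEN conjunct2, THEN conjunct2, THEN conjunct2, THEN conjunct2, THEN conjunct2, THEN conjunct2, THEN conjunct2, THEN conjunct1]
lemmas gs8 = Gr_skew[unfolded is_skew_def Let_def, THEN conjunct2, THEN conjunct2, THEN conjunct2, THEN conjunct2, THEN conjunct2, THEN conjunct2, THEN conjunct2, THEN conjunct2, THEN conjunct1]
lemmas gs9 = Gr_skew[unfolded is_skew_def Let_def, THEN conjunct2, THEN conjunct2, THEN conjunct2, THEN conjunct2, THEN conjunct2, THEN conjunct2, THEN conjunct2, THEN conjunct2, THEN conjunct2, THEN conjunct1]
lemmas gs10 = Gr_skew[unfolded is_skew_def Let_def, THEN conjunct2, THEN conjunct2, THEN conjunct2, THEN conjunct2, THEN conjunct2, THEN conjunct2, THEN conjunct2, THEN conjunct2, THEN conjunct2, THEN conjunct2, THEN conjunct1]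
lemmas gs11 = Gr_skew[unfolded is_skew_def Let_def, THEN conjunct2, THEN conjunct2, THEN conjunct2, THEN conjunct2, THEN conjunct2, THEN conjunct2, THEN conjunct2, THEN conjunct2, THEN conjunct2, THEN conjunct2, THEN conjunct2, THEN conjunct1]
lemmas gs12 = Gr_skew[unfolded is_skew_def Let_def, THEN conjunct2, THEN conjunct2, THEN conjunct2, THEN conjunct2, THEN conjunct2, THEN conjunct2, THEN conjunct2, THEN conjunct2, THEN conjunct2, THEN conjunct2, THEN conjunct2, THEN conjunct2, THEN conjunct1]
lemmas gs13 = Gr_skew[unfolded is_skew_def Let_def, THEN conjunct2, THEN conjunct2, THEN conjunct2, THEN conjunct2, THEN conjunct2, THEN conjunct2, THEN conjunct2, THEN conjunct2, THEN conjunct2, THEN conjunct2, THEN conjunct2, THEN conjunct2, THEN conjunct2, THEN conjunct1]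
lemmas gs14 = Gr_skew[unfolded is_skew_def Let_def, THEN conjunct2, THEN conjunct2, THEN conjunct2, THEN conjunct2, THEN conjunct2, THEN conjunct2, THEN conjunct2, THEN conjunct2, THEN conjunct2, THEN conjunct2, THEN conjunct2, THEN conjunct2, THEN conjunct2, THEN conjunct2, THEN conjunct1]
lemmas gs15 = Gr_skew[unfolded is_skew_def Let_def, THEN conjunct2, THEN conjunct2, THEN conjunct2, THEN conjunct2, THEN conjunct2, THEN conjunct2, THEN conjunct2, THEN conjunct2, THEN conjunct2, THEN conjunct2, THEN conjunct2, THEN conjunct2, THEN conjunct2, THEN conjunct2, THEN conjunct2]
lemmas gl0 = G_lax[unfolded is_lax_def Let_def, THEN conjunct1]
lemmas gl1 = G_lax[unfolded is_lax_def Let_def, THEN conjunct2, THEN conjunct1]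
lemmas gl2 = G_lax[unfolded is_lax_def Let_def, THEN conjunct2, THEN conjunct2, THEN conjunct1]
lemmas gl3 = G_lax[unfolded is_lax_def Let_def, THEN conjunct2, THEN conjunct2, THEN conjunct2, THEN conjunct1]
lemmas gl4 = G_lax[unfolded is_lax_def Let_def, THEN conjunct2, THEN conjunct2, THEN conjunct2, THEN conjunct2, THEN conjunct1]
lemmas gl5 = G_lax[unfolded is_lax_def Let_def, THEN conjunct2, THEN conjunct2, THEN conjunct2, THEN conjunct2, THEN conjunct2, THEN conjunct1]
lemmas gl6 = G_lax[unfolded is_lax_def Let_def, THEN conjunct2, THEN conjunct2, THEN conjunct2, THEN conjunct2, THEN conjunct2, THEN conjunct2]
lemmas gg0 = grading[unfolded is_grading_def, THEN conjunct1]
lemmas gg1 = grading[unfolded is_grading_def, THEN conjunct2, THEN conjunct1]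
lemmas gg2 = grading[unfolded is_grading_def, THEN conjunct2, THEN conjunct2, THEN conjunct1]
lemmas gg3 = grading[unfolded is_grading_def, THEN conjunct2, THEN conjunct2, THEN conjunct2, THEN conjunct1]
lemmas gg4 = grading[unfolded is_grading_def, THEN conjunct2, THEN conjunct2, THEN conjunct2, THEN conjunct2, THEN conjunct1]
lemmas gg5 = grading[unfolded is_grading_def, THEN conjunct2, THEN conjunct2, THEN conjunct2, THEN conjunct2, THEN conjunct2]
lemmas gcat = gs0[unfolded is_category_def]
lemmas gfun = gl0[unfolded is_functor_def]

lemma gdom_ob[simp]: "f \<in> GA \<Longrightarrow> gdm f \<in> GO" using gcat by blast
lemma gcod_ob[simp]: "f \<in> GA \<Longrightarrow> gcod f \<in> GO" using gcat by blast
lemma gid_ar[simp]: "a \<in> GO \<Longrightarrow> cid Gr a \<in> GA" and gid_dom[simp]: "a \<in> GO \<Longrightarrow> gdm (cid Gr a) = a"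
  and gid_cod[simp]: "a \<in> GO \<Longrightarrow> gcod (cid Gr a) = a"
  using gcat unfolding hom_def by blast+
lemma gcomp_ar[simp]: "f \<in> GA \<Longrightarrow> h \<in> GA \<Longrightarrow> gdm h = gcod f \<Longrightarrow> ccomp Gr h f \<in> GA"
  and gcomp_dom[simp]: "f \<in> GA \<Longrightarrow> h \<in> GA \<Longrightarrow> gdm h = gcod f \<Longrightarrow> gdm (ccomp Gr h f) = gdm f"
  and gcomp_cod[simp]: "f \<in> GA \<Longrightarrow> h \<in> GA \<Longrightarrow> gdm h = gcod f \<Longrightarrow> gcod (ccomp Gr h f) = gcod h"
  using gcat unfolding hom_def by blast+
lemma gI_ob[simp]: "gI \<in> GO" using gs1 by blast
lemma gt_ob[simp]: "a \<in> GO \<Longrightarrow> b \<in> GO \<Longrightarrow> gt a b \<in> GO" using gs2 by blast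
lemma gtm_ar[simp]: "f \<in> GA \<Longrightarrow> h \<in> GA \<Longrightarrow> Gm f h \<in> GA"
  and gtm_dom[simp]: "f \<in> GA \<Longrightarrow> h \<in> GA \<Longrightarrow> gdm (Gm f h) = gt (gdm f) (gdm h)"
  and gtm_cod[simp]: "f \<in> GA \<Longrightarrow> h \<in> GA \<Longrightarrow> gcod (Gm f h) = gt (gcod f) (gcod h)"
  using gs3 unfolding hom_def by blast+
lemma glam_ar[simp]: "a \<in> GO \<Longrightarrow> lam Gr a \<in> GA" and glam_dom[simp]: "a \<in> GO \<Longrightarrow> gdm (lam Gr a) = gt gI a"
  and glam_cod[simp]: "a \<in> GO \<Longrightarrow> gcod (lam Gr a) = a"
  and grho_ar[simp]: "a \<in> GO \<Longrightarrow> rho Gr a \<in> GA" and grho_dom[simp]: "a \<in> GO \<Longrightarrow> gdm (rho Gr a) = a"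
  and grho_cod[simp]: "a \<in> GO \<Longrightarrow> gcod (rho Gr a) = gt a gI"
  using gs6 unfolding hom_def by blast+
lemma gal_ar[simp]: "a \<in> GO \<Longrightarrow> b \<in> GO \<Longrightarrow> c \<in> GO \<Longrightarrow> alph Gr a b c \<in> GA"
  and gal_dom[simp]: "a \<in> GO \<Longrightarrow> b \<in> GO \<Longrightarrow> c \<in> GO \<Longrightarrow> gdm (alph Gr a b c) = gt (gt a b) c"
  and gal_cod[simp]: "a \<in> GO \<Longrightarrow> b \<in> GO \<Longrightarrow> c \<in> GO \<Longrightarrow> gcod (alph Gr a b c) = gt a (gt b c)"
  using gs7 unfolding hom_def by blast+

lemma Go_ob[simp]: "d \<in> GO \<Longrightarrow> Go d \<in> Ob" using gfun by blast
lemma Gf_ar[simp]: "f \<in> GA \<Longrightarrow> Gf f \<in> Ar" and Gf_dom[simp]: "f \<in> GA \<Longrightarrow> dm (Gf f) = Go (gdm f)"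
  and Gf_cod[simp]: "f \<in> GA \<Longrightarrow> cd (Gf f) = Go (gcod f)"
  using gfun unfolding hom_def by blast+
lemma Gf_id[simp]: "a \<in> GO \<Longrightarrow> Gf (cid Gr a) = ii (Go a)" using gfun by blast
lemma Gf_comp: "f \<in> GA \<Longrightarrow> h \<in> GA \<Longrightarrow> gdm h = gcod f \<Longrightarrow> Gf (ccomp Gr h f) = Gf h \<cdot> Gf f" using gfun by blast
lemma Gu_ar[simp]: "Gu \<in> Ar" and Gu_dom[simp]: "dm Gu = I0" and Gu_cod[simp]: "cd Gu = Go gI"
  using gl1 unfolding hom_def by blast+
lemma Gmu_ar[simp]: "a \<in> GO \<Longrightarrow> b \<in> GO \<Longrightarrow> Gmu a b \<in> Ar"
  and Gmu_dom[simp]: "a \<in> GO \<Longrightarrow> b \<in> GO \<Longrightarrow> dm (Gmu a b) = tn (Go a) (Go b)"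
  and Gmu_cod[simp]: "a \<in> GO \<Longrightarrow> b \<in> GO \<Longrightarrow> cd (Gmu a b) = Go (gt a b)"
  using gl2 unfolding hom_def by blast+
lemma Gmu_nat: "f \<in> GA \<Longrightarrow> h \<in> GA \<Longrightarrow> Gf (Gm f h) \<cdot> Gmu (gdm f) (gdm h) = Gmu (gcod f) (gcod h) \<cdot> (Gf f \<otimes> Gf h)"
  using gl3 by blast
lemma G_lu[simp]: "a \<in> GO \<Longrightarrow> Gf (lam Gr a) \<cdot> (Gmu gI a \<cdot> (Gu \<otimes> ii (Go a))) = lam C (Go a)"
  using gl4 by blast
lemma G_ru[simp]: "a \<in> GO \<Longrightarrow> Gmu a gI \<cdot> ((ii (Go a) \<otimes> Gu) \<cdot> rho C (Go a)) = Gf (rho Gr a)"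
  using gl5 by blast
lemma G_as[simp]: "a \<in> GO \<Longrightarrow> b \<in> GO \<Longrightarrow> c \<in> GO \<Longrightarrow>
  Gf (alph Gr a b c) \<cdot> (Gmu (gt a b) c \<cdot> (Gmu a b \<otimes> ii (Go c)))
   = Gmu a (gt b c) \<cdot> ((ii (Go a) \<otimes> Gmu b c) \<cdot> alph C (Go a) (Go b) (Go c))"
  using gl6 by blast

lemma g_ar[simp]: "d \<in> GO \<Longrightarrow> g d \<in> Ar" and g_dom[simp]: "d \<in> GO \<Longrightarrow> dm (g d) = Go d"
  and g_cod[simp]: "d \<in> GO \<Longrightarrow> cd (g d) = T" and g_M[simp]: "d \<in> GO \<Longrightarrow> g d \<in> M"
  using gg2 unfolding hom_def by blast+
lemma g_nat: "f \<in> GA \<Longrightarrow> g (gcod f) \<cdot> Gf f = g (gdm f)" using gg3 by blast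
lemma g_nat'[simp]: "f \<in> GA \<Longrightarrow> a = gcod f \<Longrightarrow> g a \<cdot> Gf f = g (gdm f)" using g_nat by simp
lemmas g_nat_k[simp] = kext[OF g_nat']
lemma g_u[simp]: "g gI \<cdot> Gu = e" using gg4 by blast
lemmas g_u_k[simp] = kext[OF g_u]
lemma g_mu[simp]: "d \<in> GO \<Longrightarrow> d' \<in> GO \<Longrightarrow> g (gt d d') \<cdot> Gmu d d' = m \<cdot> (g d \<otimes> g d')" using gg5 by blast
lemmas g_mu_k[simp] = kext[OF g_mu]


definition "Fo d = (Go d, g d)"
lemma Fo_simps[simp]: "fst (Fo d) = Go d" "snd (Fo d) = g d" unfolding Fo_def by simp_all
lemma Fo_SO[simp]: "d \<in> GO \<Longrightarrow> Fo d \<in> SO" unfolding SO_iff by simp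
lemma Ecl_F[simp]: "d \<in> GO \<Longrightarrow> h \<in> E \<Longrightarrow> h \<otimes> ii (Go d) \<in> E" using Eclosed'[of "Fo d" h] by simp
lemma LM_snd_F[simp]: "d \<in> GO \<Longrightarrow> g d \<cdot> LM (Fo d) = snd (bx U (Fo d))" using LM_snd[of "Fo d"] by simp
lemmas LM_snd_F_k[simp] = kext[OF LM_snd_F]
lemma Fid_SA[simp]: "d \<in> GO \<Longrightarrow> (Fo d, ii (Go d), Fo d) \<in> SA" by (intro SA_I) simp_all
lemma Gf_SA[simp]: "f \<in> GA \<Longrightarrow> (Fo (gdm f), Gf f, Fo (gcod f)) \<in> SA" by (intro SA_I) simp_all

definition "uF = (SOME d. d \<in> hom C (fst U) (Go gI) \<and> d \<cdot> q0 = Gu \<and> g gI \<cdot> d = snd U)"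
lemma uF_facts: "uF \<in> Ar" "dm uF = fst U" "cd uF = Go gI" "uF \<cdot> q0 = Gu" "g gI \<cdot> uF = snd U"
proof -
  have "uF \<in> hom C (fst U) (Go gI) \<and> uF \<cdot> q0 = Gu \<and> g gI \<cdot> uF = snd U"
    unfolding uF_def by (rule diag_some) simp_all
  then show "uF \<in> Ar" "dm uF = fst U" "cd uF = Go gI" "uF \<cdot> q0 = Gu" "g gI \<cdot> uF = snd U"
    unfolding hom_def by simp_all
qed
lemmas [simp] = uF_facts
lemmas uF_k[simp] = kext[OF uF_facts(4)] kext[OF uF_facts(5)]
lemma uF_SA[simp]: "(U, uF, Fo gI) \<in> SA" by (intro SA_I) simp_all

definition "mF d d' = (SOME x. x \<in> hom C (fst (bx (Fo d) (Fo d'))) (Go (gt d d')) \<and> x \<cdot> Q (Fo d) (Fo d') = Gmu d d'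
   \<and> g (gt d d') \<cdot> x = snd (bx (Fo d) (Fo d')))"
lemma mF_facts:
  assumes "d \<in> GO" "d' \<in> GO"
  shows "mF d d' \<in> Ar" "dm (mF d d') = fst (bx (Fo d) (Fo d'))" "cd (mF d d') = Go (gt d d')"
    "mF d d' \<cdot> Q (Fo d) (Fo d') = Gmu d d'" "g (gt d d') \<cdot> mF d d' = snd (bx (Fo d) (Fo d'))"
proof -
  have "mF d d' \<in> hom C (fst (bx (Fo d) (Fo d'))) (Go (gt d d')) \<and> mF d d' \<cdot> Q (Fo d) (Fo d') = Gmu d d'
   \<and> g (gt d d') \<cdot> mF d d' = snd (bx (Fo d) (Fo d'))"
    unfolding mF_def by (rule diag_some) (use assms in simp_all)
  then show "mF d d' \<in> Ar" "dm (mF d d') = fst (bx (Fo d) (Fo d'))" "cd (mF d d') = Go (gt d d')"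
    "mF d d' \<cdot> Q (Fo d) (Fo d') = Gmu d d'" "g (gt d d') \<cdot> mF d d' = snd (bx (Fo d) (Fo d'))"
    unfolding hom_def by simp_all
qed
lemmas [simp] = mF_facts
lemmas mF_k[simp] = kext[OF mF_facts(4)] kext[OF mF_facts(5)]
lemma mF_SA[simp]: "d \<in> GO \<Longrightarrow> d' \<in> GO \<Longrightarrow> (bx (Fo d) (Fo d'), mF d d', Fo (gt d d')) \<in> SA"
  by (intro SA_I) simp_all

definition "FF = \<lparr> fo = Fo, fm = (\<lambda>u. (Fo (gdm u), Gf u, Fo (gcod u))), lu = (U, uF, Fo gI),
   lm = (\<lambda>d d'. (bx (Fo d) (Fo d'), mF d d', Fo (gt d d'))) \<rparr>"
lemma FF_simps[simp]: "fo FF = Fo" "fm FF = (\<lambda>u. (Fo (gdm u), Gf u, Fo (gcod u)))" "lu FF = (U, uF, Fo gI)"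
  "lm FF = (\<lambda>d d'. (bx (Fo d) (Fo d'), mF d d', Fo (gt d d')))"
  unfolding FF_def by simp_all

lemma F_nat:
  assumes f: "f \<in> GA" and h: "h \<in> GA"
  shows "Gf (Gm f h) \<cdot> mF (gdm f) (gdm h) = mF (gcod f) (gcod h) \<cdot> BX (Fo (gdm f)) (Gf f) (Fo (gcod f)) (Fo (gdm h)) (Gf h) (Fo (gcod h))"
proof -
  have ch: "(Gf (Gm f h) \<cdot> mF (gdm f) (gdm h)) \<cdot> Q (Fo (gdm f)) (Fo (gdm h))
     = (mF (gcod f) (gcod h) \<cdot> BX (Fo (gdm f)) (Gf f) (Fo (gcod f)) (Fo (gdm h)) (Gf h) (Fo (gcod h))) \<cdot> Q (Fo (gdm f)) (Fo (gdm h))"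
    using f h by (simp add: Gmu_nat)
  show ?thesis
    by (rule sl_unique[of "bx (Fo (gdm f)) (Fo (gdm h))" "Fo (gt (gcod f) (gcod h))", OF _ _ _ _ _ _ _ _ _ _ ch])
       (use f h in simp_all)
qed

lemma F_lu:
  assumes x: "x \<in> GO"
  shows "Gf (lam Gr x) \<cdot> (mF gI x \<cdot> BX U uF (Fo gI) (Fo x) (ii (Go x)) (Fo x)) = LM (Fo x)"
proof -
  have ch: "(Gf (lam Gr x) \<cdot> (mF gI x \<cdot> BX U uF (Fo gI) (Fo x) (ii (Go x)) (Fo x))) \<cdot> (Q U (Fo x) \<cdot> (q0 \<otimes> ii (Go x)))
     = LM (Fo x) \<cdot> (Q U (Fo x) \<cdot> (q0 \<otimes> ii (Go x)))"
    using x by simp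
  show ?thesis
    by (rule sl_unique[of "bx U (Fo x)" "Fo x", OF _ _ _ _ _ _ _ _ _ _ ch]) (use x in simp_all)
qed

lemma F_ru:
  assumes x: "x \<in> GO"
  shows "mF x gI \<cdot> (BX (Fo x) (ii (Go x)) (Fo x) U uF (Fo gI) \<cdot> RH (Fo x)) = Gf (rho Gr x)"
  using x by (simp add: RH_def)

lemma F_as:
  assumes x: "x \<in> GO" and y: "y \<in> GO" and z: "z \<in> GO"
  shows "Gf (alph Gr x y z) \<cdot> (mF (gt x y) z \<cdot> BX (bx (Fo x) (Fo y)) (mF x y) (Fo (gt x y)) (Fo z) (ii (Go z)) (Fo z))
       = mF x (gt y z) \<cdot> (BX (Fo x) (ii (Go x)) (Fo x) (bx (Fo y) (Fo z)) (mF y z) (Fo (gt y z)) \<cdot> AL (Fo x) (Fo y) (Fo z))"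
proof -
  let ?e = "Q (bx (Fo x) (Fo y)) (Fo z) \<cdot> (Q (Fo x) (Fo y) \<otimes> ii (Go z))"
  have ch: "(Gf (alph Gr x y z) \<cdot> (mF (gt x y) z \<cdot> BX (bx (Fo x) (Fo y)) (mF x y) (Fo (gt x y)) (Fo z) (ii (Go z)) (Fo z))) \<cdot> ?e
       = (mF x (gt y z) \<cdot> (BX (Fo x) (ii (Go x)) (Fo x) (bx (Fo y) (Fo z)) (mF y z) (Fo (gt y z)) \<cdot> AL (Fo x) (Fo y) (Fo z))) \<cdot> ?e"
    using x y z by (simp add: AL_eq[of "Fo x" "Fo y" "Fo z", simplified])
  show ?thesis
    by (rule sl_unique[of "bx (bx (Fo x) (Fo y)) (Fo z)" "Fo (gt x (gt y z))", OF _ _ _ _ _ _ _ _ _ _ ch])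
       (use x y z in simp_all)
qed


lemma FF_lax: "is_lax Gr SK FF"
proof -
  have fn: "is_functor Gr SK (fo FF) (fm FF)"
    unfolding is_functor_def FF_simps SK_simps hom_SK
  proof (intro conjI ballI impI)
    fix f h assume f: "f \<in> GA" and h: "h \<in> GA" and fh: "gdm h = gcod f"
    show "(Fo (gdm (ccomp Gr h f)), Gf (ccomp Gr h f), Fo (gcod (ccomp Gr h f))) =
          (fst (Fo (gdm f), Gf f, Fo (gcod f)), fst (snd (Fo (gdm h), Gf h, Fo (gcod h))) \<cdot> fst (snd (Fo (gdm f), Gf f, Fo (gcod f))),
           snd (snd (Fo (gdm h), Gf h, Fo (gcod h))))"
      using f h fh by (simp add: Gf_comp)
  qed simp_all
  have n: "\<forall>f\<in>GA. \<forall>h\<in>GA. ccomp SK (fm FF (Gm f h)) (lm FF (gdm f) (gdm h))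
      = ccomp SK (lm FF (gcod f) (gcod h)) (tensm SK (fm FF f) (fm FF h))"
    by (simp add: F_nat)
  have l: "\<forall>x\<in>GO. ccomp SK (fm FF (lam Gr x)) (ccomp SK (lm FF gI x) (tensm SK (lu FF) (cid SK (fo FF x)))) = lam SK (fo FF x)"
    by (simp add: F_lu)
  have r: "\<forall>x\<in>GO. ccomp SK (lm FF x gI) (ccomp SK (tensm SK (cid SK (fo FF x)) (lu FF)) (rho SK (fo FF x))) = fm FF (rho Gr x)"
    by (simp add: F_ru)
  have a: "\<forall>x\<in>GO. \<forall>y\<in>GO. \<forall>z\<in>GO.
        ccomp SK (fm FF (alph Gr x y z)) (ccomp SK (lm FF (gt x y) z) (tensm SK (lm FF x y) (cid SK (fo FF z))))
        = ccomp SK (lm FF x (gt y z)) (ccomp SK (tensm SK (cid SK (fo FF x)) (lm FF y z)) (alph SK (fo FF x) (fo FF y) (fo FF z)))"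
    by (simp add: F_as)
  have u: "lu FF \<in> hom SK (tunit SK) (fo FF (tunit Gr))" by (simp add: hom_SK)
  have mu: "\<forall>x\<in>GO. \<forall>y\<in>GO. lm FF x y \<in> hom SK (tens SK (fo FF x) (fo FF y)) (fo FF (tens Gr x y))" by (simp add: hom_SK)
  show ?thesis unfolding is_lax_def Let_def using fn n l r a u mu by (intro conjI)
qed

definition "ff d = ii (Go d)"

lemma id_iso: "a \<in> Ob \<Longrightarrow> is_iso C (ii a)"
  unfolding is_iso_def hom_def by (intro conjI bexI[of _ "ii a"]) simp_all

lemma FF_mor: "is_grading_mor C Gr G g SK SF slice_tau FF ff"
proof -
  have mt: "is_montrans Gr C (lax_comp C SF FF) G ff"
    unfolding is_montrans_def lax_comp_def ff_def
    by (simp add: hom_def)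
  show ?thesis unfolding is_grading_mor_def
    using FF_lax mt by (simp add: id_iso ff_def slice_tau_def)
qed

end

context ctx begin
definition "iv h = (SOME k. k \<in> hom C (cd h) (dm h) \<and> k \<cdot> h = ii (dm h) \<and> h \<cdot> k = ii (cd h))"
lemma iv_facts:
  assumes "is_iso C h"
  shows "iv h \<in> Ar" "dm (iv h) = cd h" "cd (iv h) = dm h" "iv h \<cdot> h = ii (dm h)" "h \<cdot> iv h = ii (cd h)"
proof -
  have "\<exists>k. k \<in> hom C (cd h) (dm h) \<and> k \<cdot> h = ii (dm h) \<and> h \<cdot> k = ii (cd h)"
    using assms unfolding is_iso_def by blast
  then have "iv h \<in> hom C (cd h) (dm h) \<and> iv h \<cdot> h = ii (dm h) \<and> h \<cdot> iv h = ii (cd h)"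
    unfolding iv_def by (rule someI_ex)
  then show "iv h \<in> Ar" "dm (iv h) = cd h" "cd (iv h) = dm h" "iv h \<cdot> h = ii (dm h)" "h \<cdot> iv h = ii (cd h)"
    unfolding hom_def by simp_all
qed
end

locale gm = grd C T e m E M Gr G g for C :: "('o,'m,'z) skewcat_scheme" and T e m E M
   and Gr :: "('go,'gm,'z2) skewcat_scheme" and G g +
  fixes F1 :: "('go,'gm,('o,'m) sobj,('o,'m) smor) laxf" and f1 :: "'go \<Rightarrow> 'm"
  assumes m1: "is_grading_mor C Gr G g SK SF slice_tau F1 f1"
begin

lemmas m1u = m1[unfolded is_grading_mor_def]
lemma F1_lax: "is_lax Gr SK F1" using m1u by blast
lemma f1_mt: "is_montrans Gr C (lax_comp C SF F1) G f1" using m1u by blast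
lemma f1_iso: "d \<in> GO \<Longrightarrow> is_iso C (f1 d)" using m1u by blast
lemma f1_g[simp]: "d \<in> GO \<Longrightarrow> g d \<cdot> f1 d = snd (fo F1 d)" using m1u by (simp add: slice_tau_def)

lemmas fl = F1_lax[unfolded is_lax_def Let_def]
lemmas fl0 = fl[THEN conjunct1, unfolded is_functor_def]
lemma F1o[simp]: "d \<in> GO \<Longrightarrow> fo F1 d \<in> SO" using fl0 by simp
lemma F1m_SA: "u \<in> GA \<Longrightarrow> fm F1 u \<in> SA" and F1m_dom: "u \<in> GA \<Longrightarrow> fst (fm F1 u) = fo F1 (gdm u)"
  and F1m_cod: "u \<in> GA \<Longrightarrow> snd (snd (fm F1 u)) = fo F1 (gcod u)"
  using fl0 unfolding hom_SK by auto
lemma F1u: "lu F1 \<in> SA" "fst (lu F1) = U" "snd (snd (lu F1)) = fo F1 gI"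
  using fl unfolding hom_SK by auto
lemma F1mu: "x \<in> GO \<Longrightarrow> y \<in> GO \<Longrightarrow> lm F1 x y \<in> SA"
  "x \<in> GO \<Longrightarrow> y \<in> GO \<Longrightarrow> fst (lm F1 x y) = bx (fo F1 x) (fo F1 y)"
  "x \<in> GO \<Longrightarrow> y \<in> GO \<Longrightarrow> snd (snd (lm F1 x y)) = fo F1 (gt x y)"
  using fl unfolding hom_SK by auto

lemmas mt = f1_mt[unfolded is_montrans_def lax_comp_def, simplified]
lemma f1_ar[simp]: "d \<in> GO \<Longrightarrow> f1 d \<in> Ar" and f1_dom[simp]: "d \<in> GO \<Longrightarrow> dm (f1 d) = fst (fo F1 d)"
  and f1_cod[simp]: "d \<in> GO \<Longrightarrow> cd (f1 d) = Go d"
  using mt unfolding hom_def by auto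


lemma f1_nat: "u \<in> GA \<Longrightarrow> f1 (gcod u) \<cdot> fst (snd (fm F1 u)) = Gf u \<cdot> f1 (gdm u)" using mt by auto
lemma f1_u: "f1 gI \<cdot> (fst (snd (lu F1)) \<cdot> q0) = Gu" using mt by auto
lemma f1_mu: "x \<in> GO \<Longrightarrow> y \<in> GO \<Longrightarrow> f1 (gt x y) \<cdot> (fst (snd (lm F1 x y)) \<cdot> Q (fo F1 x) (fo F1 y)) = Gmu x y \<cdot> (f1 x \<otimes> f1 y)"
  using mt by auto

lemma tr: "t = (fst t, fst (snd t), snd (snd t))" by simp

lemma F1m_eq: "u \<in> GA \<Longrightarrow> fm F1 u = (fo F1 (gdm u), fst (snd (fm F1 u)), fo F1 (gcod u))"
  using F1m_dom F1m_cod tr by metis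
lemma F1m_SA': "u \<in> GA \<Longrightarrow> (fo F1 (gdm u), fst (snd (fm F1 u)), fo F1 (gcod u)) \<in> SA"
  using F1m_SA F1m_eq by metis
lemma F1u_eq: "lu F1 = (U, fst (snd (lu F1)), fo F1 gI)" using F1u tr by metis
lemma F1u_SA: "(U, fst (snd (lu F1)), fo F1 gI) \<in> SA" using F1u F1u_eq by metis
lemma F1mu_eq: "x \<in> GO \<Longrightarrow> y \<in> GO \<Longrightarrow> lm F1 x y = (bx (fo F1 x) (fo F1 y), fst (snd (lm F1 x y)), fo F1 (gt x y))"
  using F1mu tr by metis
lemma F1mu_SA: "x \<in> GO \<Longrightarrow> y \<in> GO \<Longrightarrow> (bx (fo F1 x) (fo F1 y), fst (snd (lm F1 x y)), fo F1 (gt x y)) \<in> SA"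
  using F1mu F1mu_eq by metis


lemmas f1_g_k[simp] = kext[OF f1_g]
lemma phi_SA[simp]: "d \<in> GO \<Longrightarrow> (fo F1 d, f1 d, Fo d) \<in> SA" by (intro SA_I) simp_all

lemma X1_snd[simp]: "snd (fo F1 gI) \<cdot> fst (snd (lu F1)) = snd U" using SA_D(6)[OF F1u_SA] .
lemmas X1_snd_k[simp] = kext[OF X1_snd]
lemma Y1_snd[simp]: "x \<in> GO \<Longrightarrow> y \<in> GO \<Longrightarrow> snd (fo F1 (gt x y)) \<cdot> fst (snd (lm F1 x y)) = snd (bx (fo F1 x) (fo F1 y))"
  using SA_D(6)[OF F1mu_SA] .
lemmas Y1_snd_k[simp] = kext[OF Y1_snd]
lemma X1_ty[simp]: "fst (snd (lu F1)) \<in> Ar" "dm (fst (snd (lu F1))) = fst U" "cd (fst (snd (lu F1))) = fst (fo F1 gI)"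
  using SA_D[OF F1u_SA] by simp_all
lemma Y1_ty[simp]: "x \<in> GO \<Longrightarrow> y \<in> GO \<Longrightarrow> fst (snd (lm F1 x y)) \<in> Ar"
  "x \<in> GO \<Longrightarrow> y \<in> GO \<Longrightarrow> dm (fst (snd (lm F1 x y))) = fst (bx (fo F1 x) (fo F1 y))"
  "x \<in> GO \<Longrightarrow> y \<in> GO \<Longrightarrow> cd (fst (snd (lm F1 x y))) = fst (fo F1 (gt x y))"
  using SA_D[OF F1mu_SA] by simp_all
lemma M1_ty[simp]: "u \<in> GA \<Longrightarrow> fst (snd (fm F1 u)) \<in> Ar"
  "u \<in> GA \<Longrightarrow> dm (fst (snd (fm F1 u))) = fst (fo F1 (gdm u))"
  "u \<in> GA \<Longrightarrow> cd (fst (snd (fm F1 u))) = fst (fo F1 (gcod u))"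
  using SA_D[OF F1m_SA'] by simp_all
lemmas f1_u_s[simp] = f1_u
lemmas f1_mu_s[simp] = f1_mu

lemma X1_eq: "f1 gI \<cdot> fst (snd (lu F1)) = uF"
proof -
  have ch: "(f1 gI \<cdot> fst (snd (lu F1))) \<cdot> q0 = uF \<cdot> q0" by simp
  show ?thesis by (rule sl_unique[of U "Fo gI", OF _ _ _ _ _ _ _ _ _ _ ch]) simp_all
qed

lemma Y1_eq: assumes x: "x \<in> GO" and y: "y \<in> GO"
  shows "f1 (gt x y) \<cdot> fst (snd (lm F1 x y)) = mF x y \<cdot> BX (fo F1 x) (f1 x) (Fo x) (fo F1 y) (f1 y) (Fo y)"
proof -
  have ch: "(f1 (gt x y) \<cdot> fst (snd (lm F1 x y))) \<cdot> Q (fo F1 x) (fo F1 y)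
     = (mF x y \<cdot> BX (fo F1 x) (f1 x) (Fo x) (fo F1 y) (f1 y) (Fo y)) \<cdot> Q (fo F1 x) (fo F1 y)"
    using x y by simp
  show ?thesis
    by (rule sl_unique[of "bx (fo F1 x) (fo F1 y)" "Fo (gt x y)", OF _ _ _ _ _ _ _ _ _ _ ch]) (use x y in simp_all)
qed

lemma phi_2cell: "is_grading_2cell C Gr SK SF F1 f1 FF ff (\<lambda>d. (fo F1 d, f1 d, Fo d))"
proof -
  have 1: "\<forall>x\<in>GO. (fo F1 x, f1 x, Fo x) \<in> hom SK (fo F1 x) (fo FF x)" by (simp add: hom_SK)
  have 2: "\<forall>u\<in>GA. ccomp SK (fo F1 (gcod u), f1 (gcod u), Fo (gcod u)) (fm F1 u) = ccomp SK (fm FF u) (fo F1 (gdm u), f1 (gdm u), Fo (gdm u))"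
    by (simp add: F1m_dom f1_nat)
  have 3: "ccomp SK (fo F1 gI, f1 gI, Fo gI) (lu F1) = lu FF"
    by (simp add: F1u X1_eq)
  have 4: "\<forall>x\<in>GO. \<forall>y\<in>GO. ccomp SK (fo F1 (gt x y), f1 (gt x y), Fo (gt x y)) (lm F1 x y) =
          ccomp SK (lm FF x y) (tensm SK (fo F1 x, f1 x, Fo x) (fo F1 y, f1 y, Fo y))"
    by (simp add: F1mu Y1_eq)
  have 5: "\<forall>d\<in>GO. ff d \<cdot> fm SF (fo F1 d, f1 d, Fo d) = f1 d" by (simp add: ff_def)
  show ?thesis unfolding is_grading_2cell_def is_montrans_def using 1 2 3 4 5 by (intro conjI)
qed


abbreviation "v d \<equiv> iv (f1 d)"
lemma v_facts[simp]: "d \<in> GO \<Longrightarrow> v d \<in> Ar" "d \<in> GO \<Longrightarrow> dm (v d) = Go d" "d \<in> GO \<Longrightarrow> cd (v d) = fst (fo F1 d)"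
  "d \<in> GO \<Longrightarrow> v d \<cdot> f1 d = ii (fst (fo F1 d))" "d \<in> GO \<Longrightarrow> f1 d \<cdot> v d = ii (Go d)"
  using iv_facts[OF f1_iso, of d] by simp_all
lemma vl_k[simp]: "d \<in> GO \<Longrightarrow> k \<in> Ar \<Longrightarrow> cd k = fst (fo F1 d) \<Longrightarrow> v d \<cdot> (f1 d \<cdot> k) = k"
  using kext[OF v_facts(4)[of d], of k] by simp
lemma vr_k[simp]: "d \<in> GO \<Longrightarrow> k \<in> Ar \<Longrightarrow> cd k = Go d \<Longrightarrow> f1 d \<cdot> (v d \<cdot> k) = k"
  using kext[OF v_facts(5)[of d], of k] by simp
lemma v_snd[simp]: "d \<in> GO \<Longrightarrow> snd (fo F1 d) \<cdot> v d = g d"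
proof -
  assume d: "d \<in> GO"
  have "snd (fo F1 d) \<cdot> v d = (g d \<cdot> f1 d) \<cdot> v d" using d by simp
  also have "\<dots> = g d" using d by (simp del: f1_g)
  finally show ?thesis .
qed
lemmas v_snd_k[simp] = kext[OF v_snd]
lemma psi_SA[simp]: "d \<in> GO \<Longrightarrow> (Fo d, v d, fo F1 d) \<in> SA" by (intro SA_I) simp_all

lemma v_nat: assumes u: "u \<in> GA"
  shows "v (gcod u) \<cdot> Gf u = fst (snd (fm F1 u)) \<cdot> v (gdm u)"
proof -
  have "v (gcod u) \<cdot> Gf u = v (gcod u) \<cdot> ((Gf u \<cdot> f1 (gdm u)) \<cdot> v (gdm u))" using u by simp
  also have "\<dots> = fst (snd (fm F1 u)) \<cdot> v (gdm u)" using u by (simp add: f1_nat[symmetric])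
  finally show ?thesis .
qed

lemma v_u: "v gI \<cdot> uF = fst (snd (lu F1))"
proof -
  have "v gI \<cdot> uF = v gI \<cdot> (f1 gI \<cdot> fst (snd (lu F1)))" by (simp add: X1_eq)
  also have "\<dots> = fst (snd (lu F1))" by simp
  finally show ?thesis .
qed

lemma v_mu: assumes x: "x \<in> GO" and y: "y \<in> GO"
  shows "v (gt x y) \<cdot> mF x y = fst (snd (lm F1 x y)) \<cdot> BX (Fo x) (v x) (fo F1 x) (Fo y) (v y) (fo F1 y)"
proof -
  have YQ: "fst (snd (lm F1 x y)) \<cdot> Q (fo F1 x) (fo F1 y) = v (gt x y) \<cdot> (Gmu x y \<cdot> (f1 x \<otimes> f1 y))"
  proof -
    have "fst (snd (lm F1 x y)) \<cdot> Q (fo F1 x) (fo F1 y) = v (gt x y) \<cdot> (f1 (gt x y) \<cdot> (fst (snd (lm F1 x y)) \<cdot> Q (fo F1 x) (fo F1 y)))"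
      using x y by (simp del: f1_mu_s)
    also have "\<dots> = v (gt x y) \<cdot> (Gmu x y \<cdot> (f1 x \<otimes> f1 y))" using x y by simp
    finally show ?thesis .
  qed
  have "(v (gt x y) \<cdot> mF x y) \<cdot> Q (Fo x) (Fo y) = v (gt x y) \<cdot> (Gmu x y \<cdot> ((f1 x \<cdot> v x) \<otimes> (f1 y \<cdot> v y)))"
    using x y by simp
  also have "\<dots> = (v (gt x y) \<cdot> (Gmu x y \<cdot> (f1 x \<otimes> f1 y))) \<cdot> (v x \<otimes> v y)"
    using x y by simp
  also have "\<dots> = (fst (snd (lm F1 x y)) \<cdot> Q (fo F1 x) (fo F1 y)) \<cdot> (v x \<otimes> v y)"
    by (simp only: YQ)
  also have "\<dots> = (fst (snd (lm F1 x y)) \<cdot> BX (Fo x) (v x) (fo F1 x) (Fo y) (v y) (fo F1 y)) \<cdot> Q (Fo x) (Fo y)"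
    using x y by (simp del: f1_mu_s)
  finally have ch: "(v (gt x y) \<cdot> mF x y) \<cdot> Q (Fo x) (Fo y) =
     (fst (snd (lm F1 x y)) \<cdot> BX (Fo x) (v x) (fo F1 x) (Fo y) (v y) (fo F1 y)) \<cdot> Q (Fo x) (Fo y)" .
  show ?thesis
    by (rule sl_unique[of "bx (Fo x) (Fo y)" "fo F1 (gt x y)", OF _ _ _ _ _ _ _ _ _ _ ch]) (use x y in simp_all)
qed

lemma psi_2cell: "is_grading_2cell C Gr SK SF FF ff F1 f1 (\<lambda>d. (Fo d, v d, fo F1 d))"
proof -
  have 1: "\<forall>x\<in>GO. (Fo x, v x, fo F1 x) \<in> hom SK (fo FF x) (fo F1 x)" by (simp add: hom_SK)
  have 2: "\<forall>u\<in>GA. ccomp SK (Fo (gcod u), v (gcod u), fo F1 (gcod u)) (fm FF u) = ccomp SK (fm F1 u) (Fo (gdm u), v (gdm u), fo F1 (gdm u))"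
    by (simp add: F1m_cod v_nat)
  have 3: "ccomp SK (Fo gI, v gI, fo F1 gI) (lu FF) = lu F1"
    by (subst F1u_eq) (simp add: v_u)
  have 4: "\<forall>x\<in>GO. \<forall>y\<in>GO. ccomp SK (Fo (gt x y), v (gt x y), fo F1 (gt x y)) (lm FF x y) =
          ccomp SK (lm F1 x y) (tensm SK (Fo x, v x, fo F1 x) (Fo y, v y, fo F1 y))"
    by (simp add: F1mu v_mu)
  have 5: "\<forall>d\<in>GO. f1 d \<cdot> fm SF (Fo d, v d, fo F1 d) = ff d" by (simp add: ff_def)
  show ?thesis unfolding is_grading_2cell_def is_montrans_def using 1 2 3 4 5 by (intro conjI)
qed

lemma phi_inv: "is_inv_grading_2cell C Gr SK SF F1 f1 FF ff (\<lambda>d. (fo F1 d, f1 d, Fo d))"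
  unfolding is_inv_grading_2cell_def
proof (intro conjI exI[of _ "\<lambda>d. (Fo d, v d, fo F1 d)"])
  show "is_grading_2cell C Gr SK SF F1 f1 FF ff (\<lambda>d. (fo F1 d, f1 d, Fo d))" by (rule phi_2cell)
  show "is_grading_2cell C Gr SK SF FF ff F1 f1 (\<lambda>d. (Fo d, v d, fo F1 d))" by (rule psi_2cell)
  show "\<forall>d\<in>GO. ccomp SK (Fo d, v d, fo F1 d) (fo F1 d, f1 d, Fo d) = cid SK (fo F1 d) \<and>
        ccomp SK (fo F1 d, f1 d, Fo d) (Fo d, v d, fo F1 d) = cid SK (fo FF d)"
    by simp
qed

end

theorem theorem3p11:
  fixes C :: "('o,'m) skewcat" and T :: 'o and e m :: 'm and E M :: "'m set"
    and Gr :: "('go,'gm) skewcat" and G :: "('go,'gm,'o,'m) laxf" and g :: "'go \<Rightarrow> 'm"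
  assumes skew: "is_skew C"
    and monoid: "is_monoid C T e m"
    and ofs: "is_ofs C E M"
    and Eclosed: "\<forall>x\<in>sl_obj C M T. \<forall>h\<in>E. tensm C h (cid C (fst x)) \<in> E"
    and grading: "is_grading C T e m M Gr G g"
  shows "is_grading C T e m M (slice_skew C E M T e m) (slice_fun C E M e m) slice_tau \<and>
    (\<exists>F f. is_grading_mor C Gr G g (slice_skew C E M T e m) (slice_fun C E M e m) slice_tau F f \<and>
      (\<exists>\<phi>.
        (\<forall>F' f'. is_grading_mor C Gr G g (slice_skew C E M T e m) (slice_fun C E M e m) slice_tau F' f'
           \<longrightarrow> is_inv_grading_2cell C Gr (slice_skew C E M T e m) (slice_fun C E M e m) F' f' F f (\<phi> F' f')) \<and>
        (\<forall>F' f' F'' f'' \<beta>.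
           is_grading_mor C Gr G g (slice_skew C E M T e m) (slice_fun C E M e m) slice_tau F' f' \<longrightarrow>
           is_grading_mor C Gr G g (slice_skew C E M T e m) (slice_fun C E M e m) slice_tau F'' f'' \<longrightarrow>
           is_grading_2cell C Gr (slice_skew C E M T e m) (slice_fun C E M e m) F' f' F'' f'' \<beta> \<longrightarrow>
           (\<forall>d\<in>cobj Gr. ccomp (slice_skew C E M T e m) (\<phi> F'' f'' d) (\<beta> d) = \<phi> F' f' d))))"
proof -
  interpret ctx C T e m E M
    by (intro ctx.intro skc.intro ctx_axioms.intro skew monoid ofs Eclosed)
  interpret grd C T e m E M Gr G g
    by (intro grd.intro grd_axioms.intro grading ctx.intro skc.intro ctx_axioms.intro skew monoid ofs Eclosed)
  have nat: "\<forall>F' f' F'' f'' \<beta>.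
           is_grading_mor C Gr G g SK SF slice_tau F' f' \<longrightarrow>
           is_grading_mor C Gr G g SK SF slice_tau F'' f'' \<longrightarrow>
           is_grading_2cell C Gr SK SF F' f' F'' f'' \<beta> \<longrightarrow>
           (\<forall>d\<in>cobj Gr. ccomp SK (fo F'' d, f'' d, Fo d) (\<beta> d) = (fo F' d, f' d, Fo d))"
  proof (intro allI impI ballI)
    fix F' f' F'' f'' \<beta> d
    assume c: "is_grading_2cell C Gr SK SF F' f' F'' f'' \<beta>" and d: "d \<in> cobj Gr"
    have h1: "\<beta> d \<in> hom SK (fo F' d) (fo F'' d)" using c d unfolding is_grading_2cell_def is_montrans_def by blast
    have h2: "f'' d \<cdot> fst (snd (\<beta> d)) = f' d" using c d unfolding is_grading_2cell_def by simp
    show "ccomp SK (fo F'' d, f'' d, Fo d) (\<beta> d) = (fo F' d, f' d, Fo d)"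
      using h1 h2 unfolding hom_SK by simp
  qed
  have inv: "\<forall>F' f'. is_grading_mor C Gr G g SK SF slice_tau F' f'
           \<longrightarrow> is_inv_grading_2cell C Gr SK SF F' f' FF ff (\<lambda>d. (fo F' d, f' d, Fo d))"
  proof (intro allI impI)
    fix F' f' assume mo: "is_grading_mor C Gr G g SK SF slice_tau F' f'"
    interpret gm C T e m E M Gr G g F' f'
      by (intro gm.intro gm_axioms.intro mo grd.intro grd_axioms.intro grading ctx.intro skc.intro ctx_axioms.intro skew monoid ofs Eclosed)
    show "is_inv_grading_2cell C Gr SK SF F' f' FF ff (\<lambda>d. (fo F' d, f' d, Fo d))" by (rule phi_inv)
  qed
  show ?thesis
    apply (intro conjI SK_grading exI[of _ FF] exI[of _ ff] FF_mor)
    apply (rule exI[of _ "\<lambda>F' f' d. (fo F' d, f' d, Fo d)"])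
    using inv nat by simp
qed

end
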